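(* Let $(V,H)$ be a $p+q$ almost-product structure on an $n$-dimensional pseudo-Riemannian manifold $(M,g)$, with projectors $v,h$. The following are equivalent: (i) $(V,H)$ is totally geodesic; (ii) $C\,v+D\,h$ is a Killing tensor for arbitrary constants $C,D$; (iii) $C\,(q\,v-p\,h)$ is a conformal tensor for an arbitrary constant $C$.
   Context: A $p+q$ almost-product structure: $V$ a rank-$p$ distribution on which $g$ is nondegenerate, $H=V^\perp$ of rank $q=n-p$; $v,h$ the orthogonal projectors, regarded as covariant 2-tensors via $g$ ($g=v+h$). Generalized second fundamental form $Q_v(x,y)=h(\nabla_{v(x)}v(y))$ with symmetric part $S_v$, and analogously $S_h$; $(V,H)$ is totally geodesic if $S_v=0$ and $S_h=0$. Killing tensor: symmetric $K$ with $\nabla_{(a}K_{bc)}=0$. Conformal tensor: traceless symmetric $T$ with $\nabla_{(a}T_{bc)}=g_{(ab}t_{c)}$ for some 1-form $t$. *)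

theory Defs
  imports "HOL-Analysis.Analysis"
begin

text \<open>Local (coordinate) model: the manifold is an open set U of real^'n,
  'n a finite index type with CARD('n) = n. Tensor fields are given by
  their components in the coordinate frame.\<close>

type_synonym 'n tensor2 = "real^'n \<Rightarrow> 'n \<Rightarrow> 'n \<Rightarrow> real"

definition pd :: "(real^'n \<Rightarrow> real) \<Rightarrow> 'n \<Rightarrow> real^'n \<Rightarrow> real" where
  "pd f k x = deriv (\<lambda>t. f (x + t *\<^sub>R axis k 1)) 0"

definition gform :: "'n::finite tensor2 \<Rightarrow> real^'n \<Rightarrow> real^'n \<Rightarrow> real^'n \<Rightarrow> real" where
  "gform g x X Y = (\<Sum>i\<in>UNIV. \<Sum>j\<in>UNIV. X$i * g x i j * Y$j)"

definition ginv :: "'n::finite tensor2 \<Rightarrow> 'n tensor2" where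
  "ginv g x i j = matrix_inv (\<chi> a b. g x a b) $ i $ j"

definition pseudo_riemannian_on :: "(real^'n::finite) set \<Rightarrow> 'n tensor2 \<Rightarrow> bool" where
  "pseudo_riemannian_on U g \<longleftrightarrow> open U \<and>
     (\<forall>x\<in>U. (\<forall>i j. g x i j = g x j i) \<and> det (\<chi> a b. g x a b) \<noteq> 0 \<and>
        (\<forall>i j. (\<lambda>y. g y i j) differentiable (at x)))"

text \<open>Christoffel symbols of the Levi-Civita connection: christ g x a b c = Gamma^a_{bc}.\<close>
definition christ :: "'n::finite tensor2 \<Rightarrow> real^'n \<Rightarrow> 'n \<Rightarrow> 'n \<Rightarrow> 'n \<Rightarrow> real" where
  "christ g x a b c = (1/2) * (\<Sum>d\<in>UNIV. ginv g x a d *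
      (pd (\<lambda>y. g y d c) b x + pd (\<lambda>y. g y d b) c x - pd (\<lambda>y. g y b c) d x))"

definition covvec :: "'n::finite tensor2 \<Rightarrow> real^'n \<Rightarrow> real^'n \<Rightarrow> (real^'n \<Rightarrow> real^'n) \<Rightarrow> real^'n" where
  "covvec g x Z W = (\<chi> d. \<Sum>c\<in>UNIV. Z$c *
      (pd (\<lambda>y. W y $ d) c x + (\<Sum>e\<in>UNIV. christ g x d c e * W x $ e)))"

text \<open>Covariant derivative of a covariant 2-tensor: cov2 g T x a b c = nabla_a T_{bc}.\<close>
definition cov2 :: "'n::finite tensor2 \<Rightarrow> 'n tensor2 \<Rightarrow> real^'n \<Rightarrow> 'n \<Rightarrow> 'n \<Rightarrow> 'n \<Rightarrow> real" where
  "cov2 g T x a b c = pd (\<lambda>y. T y b c) a x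
      - (\<Sum>e\<in>UNIV. christ g x e a b * T x e c) - (\<Sum>e\<in>UNIV. christ g x e a c * T x b e)"

definition sym3 :: "('n \<Rightarrow> 'n \<Rightarrow> 'n \<Rightarrow> real) \<Rightarrow> 'n \<Rightarrow> 'n \<Rightarrow> 'n \<Rightarrow> real" where
  "sym3 F a b c = (F a b c + F a c b + F b a c + F b c a + F c a b + F c b a) / 6"

definition killing_tensor_on :: "(real^'n::finite) set \<Rightarrow> 'n tensor2 \<Rightarrow> 'n tensor2 \<Rightarrow> bool" where
  "killing_tensor_on U g K \<longleftrightarrow>
     (\<forall>x\<in>U. (\<forall>a b. K x a b = K x b a) \<and> (\<forall>a b c. sym3 (cov2 g K x) a b c = 0))"

definition conformal_tensor_on :: "(real^'n::finite) set \<Rightarrow> 'n tensor2 \<Rightarrow> 'n tensor2 \<Rightarrow> bool" where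
  "conformal_tensor_on U g T \<longleftrightarrow>
     (\<forall>x\<in>U. (\<forall>a b. T x a b = T x b a) \<and> (\<Sum>a\<in>UNIV. \<Sum>b\<in>UNIV. ginv g x a b * T x a b) = 0) \<and>
     (\<exists>t :: real^'n \<Rightarrow> 'n \<Rightarrow> real. \<forall>x\<in>U. \<forall>a b c.
        sym3 (cov2 g T x) a b c = sym3 (\<lambda>a b c. g x a b * t x c) a b c)"

text \<open>A p+q almost-product structure: V assigns to each point a p-dimensional
  subspace on which g is nondegenerate; H = V^perp. The g-orthogonal projector onto V
  (as an endomorphism/matrix) and the complementary one onto H:\<close>

definition vmat :: "'n::finite tensor2 \<Rightarrow> (real^'n \<Rightarrow> (real^'n) set) \<Rightarrow> real^'n \<Rightarrow> real^'n^'n" where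
  "vmat g V x = (THE A. \<forall>X. A *v X \<in> V x \<and> (\<forall>Y\<in>V x. gform g x (X - A *v X) Y = 0))"

definition hmat :: "'n::finite tensor2 \<Rightarrow> (real^'n \<Rightarrow> (real^'n) set) \<Rightarrow> real^'n \<Rightarrow> real^'n^'n" where
  "hmat g V x = mat 1 - vmat g V x"

text \<open>The projectors regarded as covariant 2-tensors via g (so g = v + h).\<close>
definition vcov :: "'n::finite tensor2 \<Rightarrow> (real^'n \<Rightarrow> (real^'n) set) \<Rightarrow> 'n tensor2" where
  "vcov g V x a b = gform g x (vmat g V x *v axis a 1) (axis b 1)"

definition hcov :: "'n::finite tensor2 \<Rightarrow> (real^'n \<Rightarrow> (real^'n) set) \<Rightarrow> 'n tensor2" where
  "hcov g V x a b = gform g x (hmat g V x *v axis a 1) (axis b 1)"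

definition almost_product_on ::
  "(real^'n::finite) set \<Rightarrow> 'n tensor2 \<Rightarrow> (real^'n \<Rightarrow> (real^'n) set) \<Rightarrow> nat \<Rightarrow> bool" where
  "almost_product_on U g V p \<longleftrightarrow>
     (\<forall>x\<in>U. subspace (V x) \<and> dim (V x) = p \<and>
        (\<forall>X\<in>V x. (\<forall>Y\<in>V x. gform g x X Y = 0) \<longrightarrow> X = 0) \<and>
        (\<forall>i j. (\<lambda>y. vmat g V y $ i $ j) differentiable (at x)))"

text \<open>Generalized second fundamental forms (H-valued, resp. V-valued), evaluated on the
  coordinate vectors: Qv x a b = h(nabla_{v(e_a)} v(e_b)), Qh x a b = v(nabla_{h(e_a)} h(e_b)).\<close>
definition Qv :: "'n::finite tensor2 \<Rightarrow> (real^'n \<Rightarrow> (real^'n) set) \<Rightarrow> real^'n \<Rightarrow> 'n \<Rightarrow> 'n \<Rightarrow> real^'n" where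
  "Qv g V x a b = hmat g V x *v
     covvec g x (vmat g V x *v axis a 1) (\<lambda>y. vmat g V y *v axis b 1)"

definition Qh :: "'n::finite tensor2 \<Rightarrow> (real^'n \<Rightarrow> (real^'n) set) \<Rightarrow> real^'n \<Rightarrow> 'n \<Rightarrow> 'n \<Rightarrow> real^'n" where
  "Qh g V x a b = vmat g V x *v
     covvec g x (hmat g V x *v axis a 1) (\<lambda>y. hmat g V y *v axis b 1)"

definition Sv where "Sv g V x a b = (1/2) *\<^sub>R (Qv g V x a b + Qv g V x b a)"
definition Sh where "Sh g V x a b = (1/2) *\<^sub>R (Qh g V x a b + Qh g V x b a)"

definition totally_geodesic_on ::
  "(real^'n::finite) set \<Rightarrow> 'n tensor2 \<Rightarrow> (real^'n \<Rightarrow> (real^'n) set) \<Rightarrow> bool" where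
  "totally_geodesic_on U g V \<longleftrightarrow> (\<forall>x\<in>U. \<forall>a b. Sv g V x a b = 0 \<and> Sh g V x a b = 0)"

end

theory Submission
  imports Defs
begin

lemma pd_eq: "((\<lambda>t. f (x + t *\<^sub>R axis k 1)) has_real_derivative d) (at 0) \<Longrightarrow> pd f k x = d"
  by (simp add: pd_def DERIV_imp_deriv)

lemma pd_has:
  assumes "f differentiable (at x)"
  shows "((\<lambda>t. f (x + t *\<^sub>R axis k 1)) has_real_derivative pd f k x) (at 0)"
proof -
  have l: "(\<lambda>t::real. x + t *\<^sub>R axis k (1::real)) differentiable (at 0)"
    by (intro derivative_intros) 
  have "(f \<circ> (\<lambda>t::real. x + t *\<^sub>R axis k (1::real))) differentiable (at 0)"
    using assms l by (intro differentiable_chain_at) auto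
  hence "(\<lambda>t. f (x + t *\<^sub>R axis k 1)) differentiable (at 0)" by (simp add: o_def)
  thus ?thesis unfolding pd_def using DERIV_deriv_iff_real_differentiable by blast
qed

lemma ev_line: "open U \<Longrightarrow> x \<in> U \<Longrightarrow> eventually (\<lambda>t::real. x + t *\<^sub>R axis k (1::real) \<in> U) (nhds 0)"
proof -
  assume "open U" "x \<in> U"
  have "((\<lambda>t::real. x + t *\<^sub>R axis k (1::real)) \<longlongrightarrow> x + 0 *\<^sub>R axis k 1) (nhds 0)"
    by (intro tendsto_intros) (simp add: tendsto_ident_at filterlim_ident)
  hence "((\<lambda>t::real. x + t *\<^sub>R axis k (1::real)) \<longlongrightarrow> x) (nhds 0)" by simp
  thus ?thesis using \<open>open U\<close> \<open>x \<in> U\<close> topological_tendstoD by blast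
qed

lemma pd_cong:
  assumes "open U" "x \<in> U" "\<And>y. y \<in> U \<Longrightarrow> f y = h y"
  shows "pd f k x = pd h k x"
proof -
  have e: "eventually (\<lambda>t. f (x + t *\<^sub>R axis k 1) = h (x + t *\<^sub>R axis k 1)) (nhds 0)"
    using ev_line[OF assms(1,2), of k] by eventually_elim (simp add: assms(3))
  have "\<And>D. DERIV (\<lambda>t. f (x + t *\<^sub>R axis k 1)) 0 :> D = DERIV (\<lambda>t. h (x + t *\<^sub>R axis k 1)) 0 :> D"
    by (rule DERIV_cong_ev[OF refl e refl])
  thus ?thesis unfolding pd_def deriv_def by simp
qed


lemma matrix_inv_both:
  fixes M :: "real^'n^'n"
  assumes "invertible M"
  shows "M ** matrix_inv M = mat 1" "matrix_inv M ** M = mat 1"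
proof -
  have "\<exists>A'. M ** A' = mat 1 \<and> A' ** M = mat 1" using assms unfolding invertible_def by blast
  hence "M ** matrix_inv M = mat 1 \<and> matrix_inv M ** M = mat 1"
    unfolding matrix_inv_def by (rule someI_ex)
  thus "M ** matrix_inv M = mat 1" "matrix_inv M ** M = mat 1" by auto
qed

lemma gform_eq: "gform g x X Y = X \<bullet> ((\<chi> a b. g x a b) *v Y)"
  by (simp add: gform_def inner_vec_def matrix_vector_mult_def sum_distrib_left mult.assoc)

lemma inner_sym_matrix:
  fixes M :: "real^'n^'n"
  assumes "transpose M = M"
  shows "X \<bullet> (M *v Y) = Y \<bullet> (M *v X)"
proof -
  have "X \<bullet> (M *v Y) = (X v* M) \<bullet> Y" by (simp add: dot_lmul_matrix)
  also have "X v* M = transpose M *v X" by simp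
  finally show ?thesis using assms by (simp add: inner_commute)
qed


lemma inj_minv:
  fixes M :: "real^'n^'n"
  assumes inv: "invertible M"
  shows "inj ((*v) (matrix_inv M))"
proof (rule injI)
  fix a b :: "real^'n" assume "matrix_inv M *v a = matrix_inv M *v b"
  hence "M *v (matrix_inv M *v a) = M *v (matrix_inv M *v b)" by simp
  thus "a = b" by (simp add: matrix_vector_mul_assoc matrix_inv_both[OF inv])
qed

lemma sub_W: "subspace {Z. \<forall>Y\<in>S. Z \<bullet> (M *v Y) = (0::real)}"
  unfolding subspace_def by (simp add: inner_add_left)

lemma dim_W:
  fixes M :: "real^'n^'n"
  assumes sym: "transpose M = M" and inv: "invertible M" and sub: "subspace S"
  shows "dim {Z. \<forall>Y\<in>S. Z \<bullet> (M *v Y) = 0} + dim S = CARD('n)"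
proof -
  define Oc where "Oc = {y. \<forall>x\<in>S. orthogonal x y}"
  define W where "W = {Z. \<forall>Y\<in>S. Z \<bullet> (M *v Y) = 0}"
  have dO: "dim Oc + dim S = CARD('n)"
    using dim_subspace_orthogonal_to_vectors[OF sub subspace_UNIV] unfolding Oc_def by simp
  have a: "Z \<in> W \<longleftrightarrow> M *v Z \<in> Oc" for Z
    unfolding W_def Oc_def orthogonal_def
    using inner_sym_matrix[OF sym] by (simp add: inner_commute)
  have b: "M *v (matrix_inv M *v z) = z" for z
    by (simp add: matrix_vector_mul_assoc matrix_inv_both[OF inv])
  have c: "matrix_inv M *v (M *v z) = z" for z
    by (simp add: matrix_vector_mul_assoc matrix_inv_both[OF inv])
  have WO: "W = (\<lambda>z. matrix_inv M *v z) ` Oc"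
  proof
    show "W \<subseteq> (\<lambda>z. matrix_inv M *v z) ` Oc"
    proof
      fix Z assume "Z \<in> W"
      hence "M *v Z \<in> Oc" using a by blast
      moreover have "Z = matrix_inv M *v (M *v Z)" using c by simp
      ultimately show "Z \<in> (\<lambda>z. matrix_inv M *v z) ` Oc" by blast
    qed
    show "(\<lambda>z. matrix_inv M *v z) ` Oc \<subseteq> W"
      using a b by auto
  qed
  have sO: "subspace Oc" unfolding Oc_def subspace_def orthogonal_def
    by (simp add: inner_add_right)
  have sW: "subspace W" unfolding W_def by (rule sub_W)
  have "aff_dim W = aff_dim Oc" unfolding WO
    by (rule aff_dim_injective_linear_image) (auto simp: matrix_vector_mul_linear inj_minv[OF inv])
  hence "dim W = dim Oc" using aff_dim_subspace[OF sO] aff_dim_subspace[OF sW] by simp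
  thus ?thesis using dO unfolding W_def by simp
qed


lemma proj_exists:
  fixes M :: "real^'n^'n"
  assumes sym: "transpose M = M" and inv: "invertible M" and sub: "subspace S"
    and nd: "\<forall>X\<in>S. (\<forall>Y\<in>S. X \<bullet> (M *v Y) = 0) \<longrightarrow> X = 0"
  shows "\<exists>P. \<forall>X. P *v X \<in> S \<and> (\<forall>Y\<in>S. (X - P *v X) \<bullet> (M *v Y) = 0)"
proof -
  define W where "W = {Z. \<forall>Y\<in>S. Z \<bullet> (M *v Y) = 0}"
  define ST where "ST = {x + y |x y. x \<in> S \<and> y \<in> W}"
  have subW: "subspace W" unfolding W_def by (rule sub_W)
  have dW: "dim W + dim S = CARD('n)" unfolding W_def by (rule dim_W[OF sym inv sub])
  have SW0: "S \<inter> W = {0}"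
  proof
    show "S \<inter> W \<subseteq> {0}" using nd unfolding W_def by blast
    show "{0} \<subseteq> S \<inter> W" using subspace_0[OF sub] subspace_0[OF subW] by blast
  qed
  have "dim ST + dim (S \<inter> W) = dim S + dim W"
    unfolding ST_def by (rule dim_sums_Int[OF sub subW])
  hence d: "dim ST = CARD('n)" using SW0 dW by simp
  have sST: "subspace ST" unfolding ST_def by (rule subspace_sums[OF sub subW])
  have "span ST = UNIV" using d dim_eq_full[of ST] by (simp add: DIM_cart)
  moreover have "span ST = ST" using sST by simp
  ultimately have all: "ST = UNIV" by simp
  have "\<forall>X. \<exists>Y. Y \<in> S \<and> X - Y \<in> W"
  proof
    fix X :: "real^'n"
    have "X \<in> ST" using all by simp
    then obtain y z where "X = y + z" "y \<in> S" "z \<in> W" unfolding ST_def by blast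
    thus "\<exists>Y. Y \<in> S \<and> X - Y \<in> W" by (intro exI[of _ y]) simp
  qed
  then obtain pr where pr: "\<And>X. pr X \<in> S" "\<And>X. X - pr X \<in> W" by metis
  define P where "P = (\<chi> i j. pr (axis j 1) $ i)"
  have Pv: "P *v X = (\<Sum>j\<in>UNIV. X$j *\<^sub>R pr (axis j 1))" for X
    by (simp add: P_def matrix_vector_mult_def vec_eq_iff mult.commute)
  have Xe: "X = (\<Sum>j\<in>UNIV. X$j *\<^sub>R axis j 1)" for X :: "real^'n"
    using basis_expansion[of X] by (simp add: scalar_mult_eq_scaleR)
  have Xd: "X - P *v X = (\<Sum>j\<in>UNIV. X$j *\<^sub>R (axis j 1 - pr (axis j 1)))" for X
  proof -
    have "X - P *v X = (\<Sum>j\<in>UNIV. X$j *\<^sub>R axis j 1) - (\<Sum>j\<in>UNIV. X$j *\<^sub>R pr (axis j 1))"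
      using Xe[of X] Pv[of X] by simp
    also have "\<dots> = (\<Sum>j\<in>UNIV. X$j *\<^sub>R (axis j 1 - pr (axis j 1)))"
      by (simp add: sum_subtractf[symmetric] scaleR_right_diff_distrib)
    finally show ?thesis .
  qed
  have "P *v X \<in> S" for X unfolding Pv
    by (intro subspace_sum[OF sub] subspace_mul[OF sub] pr)
  moreover have "X - P *v X \<in> W" for X unfolding Xd
    by (intro subspace_sum[OF subW] subspace_mul[OF subW] pr)
  ultimately show ?thesis unfolding W_def by blast
qed


lemma vmat_char:
  fixes g :: "'n::finite tensor2"
  assumes sym: "\<forall>i j. g x i j = g x j i" and dt: "det (\<chi> a b. g x a b) \<noteq> 0"
    and sub: "subspace (V x)" and nd: "\<forall>X\<in>V x. (\<forall>Y\<in>V x. gform g x X Y = 0) \<longrightarrow> X = 0"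
  shows "\<forall>X. vmat g V x *v X \<in> V x \<and> (\<forall>Y\<in>V x. gform g x (X - vmat g V x *v X) Y = 0)"
proof -
  define M where "M = (\<chi> a b. g x a b)"
  have sM: "transpose M = M" using sym by (simp add: M_def transpose_def vec_eq_iff)
  have iM: "invertible M" using dt invertible_det_nz M_def by blast
  have nd': "\<forall>X\<in>V x. (\<forall>Y\<in>V x. X \<bullet> (M *v Y) = 0) \<longrightarrow> X = 0"
    using nd by (simp add: gform_eq M_def)
  obtain P where P: "\<forall>X. P *v X \<in> V x \<and> (\<forall>Y\<in>V x. (X - P *v X) \<bullet> (M *v Y) = 0)"
    using proj_exists[OF sM iM sub nd'] by blast
  have uniq: "Q = P" if Q: "\<forall>X. Q *v X \<in> V x \<and> (\<forall>Y\<in>V x. (X - Q *v X) \<bullet> (M *v Y) = 0)" for Q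
  proof -
    have "Q *v X = P *v X" for X
    proof -
      have i: "Q *v X - P *v X \<in> V x" using P Q subspace_diff[OF sub] by blast
      have "\<forall>Y\<in>V x. (Q *v X - P *v X) \<bullet> (M *v Y) = 0"
      proof
        fix Y assume "Y \<in> V x"
        hence "(X - Q *v X) \<bullet> (M *v Y) = 0" "(X - P *v X) \<bullet> (M *v Y) = 0" using P Q by auto
        moreover have "Q *v X - P *v X = (X - P *v X) - (X - Q *v X)" by simp
        ultimately show "(Q *v X - P *v X) \<bullet> (M *v Y) = 0" by (simp add: inner_diff_left)
      qed
      thus ?thesis using nd' i by auto
    qed
    thus ?thesis by (simp add: matrix_eq)
  qed
  have "\<exists>!P. \<forall>X. P *v X \<in> V x \<and> (\<forall>Y\<in>V x. gform g x (X - P *v X) Y = 0)"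
  proof -
    have gf: "\<And>X Y. gform g x X Y = X \<bullet> (M *v Y)" by (simp add: gform_eq M_def)
    show ?thesis unfolding gf using P uniq by (intro ex1I[of _ P]) blast+
  qed
  hence "\<forall>X. vmat g V x *v X \<in> V x \<and> (\<forall>Y\<in>V x. gform g x (X - vmat g V x *v X) Y = 0)"
    unfolding vmat_def by (rule theI')
  thus ?thesis .
qed

lemma vmat_props:
  fixes g :: "'n::finite tensor2"
  assumes sym: "\<forall>i j. g x i j = g x j i" and dt: "det (\<chi> a b. g x a b) \<noteq> 0"
    and sub: "subspace (V x)" and nd: "\<forall>X\<in>V x. (\<forall>Y\<in>V x. gform g x X Y = 0) \<longrightarrow> X = 0"
  shows "\<And>X. vmat g V x *v X \<in> V x"
    and "\<And>Y. Y \<in> V x \<Longrightarrow> vmat g V x *v Y = Y"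
    and "vmat g V x ** vmat g V x = vmat g V x"
    and "transpose (vmat g V x) ** (\<chi> a b. g x a b) = (\<chi> a b. g x a b) ** vmat g V x"
    and "range ((*v) (vmat g V x)) = V x"
proof -
  define M where "M = (\<chi> a b. g x a b)"
  define A where "A = vmat g V x"
  have sM: "transpose M = M" using sym by (simp add: M_def transpose_def vec_eq_iff)
  have nd': "\<forall>X\<in>V x. (\<forall>Y\<in>V x. X \<bullet> (M *v Y) = 0) \<longrightarrow> X = 0"
    using nd by (simp add: gform_eq M_def)
  have ch: "\<forall>X. A *v X \<in> V x \<and> (\<forall>Y\<in>V x. (X - A *v X) \<bullet> (M *v Y) = 0)"
    using vmat_char[where g=g and x=x and V=V, OF assms] by (simp add: gform_eq M_def A_def)
  show p1: "\<And>X. vmat g V x *v X \<in> V x" using ch A_def by simp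
  have p2: "A *v Y = Y" if "Y \<in> V x" for Y
  proof -
    have i: "Y - A *v Y \<in> V x" using ch that subspace_diff[OF sub] by blast
    have "\<forall>Z\<in>V x. (Y - A *v Y) \<bullet> (M *v Z) = 0" using ch by blast
    thus ?thesis using nd' i by auto
  qed
  thus "\<And>Y. Y \<in> V x \<Longrightarrow> vmat g V x *v Y = Y" unfolding A_def .
  have "(A ** A) *v X = A *v X" for X
    using p2 ch by (simp add: matrix_vector_mul_assoc[symmetric])
  thus "vmat g V x ** vmat g V x = vmat g V x" unfolding A_def[symmetric] by (simp add: matrix_eq)
  have e: "(A *v X) \<bullet> (M *v Y) = X \<bullet> (M *v (A *v Y))" for X Y
  proof -
    have "(A *v X) \<bullet> (M *v (Y - A *v Y)) = (Y - A *v Y) \<bullet> (M *v (A *v X))"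
      by (rule inner_sym_matrix[OF sM])
    also have "\<dots> = 0" using ch by blast
    finally have 1: "(A *v X) \<bullet> (M *v Y) = (A *v X) \<bullet> (M *v (A *v Y))"
      by (simp add: matrix_vector_mult_diff_distrib inner_diff_right)
    have 2: "(X - A *v X) \<bullet> (M *v (A *v Y)) = 0" using ch by blast
    show ?thesis using 1 2 by (simp add: inner_diff_left)
  qed
  have "(transpose A ** M) *v Y = (M ** A) *v Y" for Y
  proof -
    have "X \<bullet> ((transpose A ** M) *v Y) = X \<bullet> ((M ** A) *v Y)" for X
    proof -
      have "X \<bullet> ((transpose A ** M) *v Y) = (X v* transpose A) \<bullet> (M *v Y)"
        by (simp only: matrix_vector_mul_assoc[symmetric] dot_lmul_matrix)
      also have "\<dots> = (A *v X) \<bullet> (M *v Y)" by simp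
      also have "\<dots> = X \<bullet> ((M ** A) *v Y)" using e by (simp add: matrix_vector_mul_assoc)
      finally show ?thesis .
    qed
    thus ?thesis using vector_eq_ldot by blast
  qed
  thus "transpose (vmat g V x) ** (\<chi> a b. g x a b) = (\<chi> a b. g x a b) ** vmat g V x"
    unfolding A_def[symmetric] M_def[symmetric] by (simp add: matrix_eq)
  show "range ((*v) (vmat g V x)) = V x"
    using p1 p2 unfolding A_def by (auto simp: image_iff) (metis)
qed


lemma trace_idem:
  fixes A :: "real^'n^'n"
  assumes idem: "A ** A = A"
  shows "trace A = real (dim (range ((*v) A)))"
proof -
  define Vr where "Vr = range ((*v) A)"
  define K where "K = {X. A *v X = 0}"
  have fixV: "A *v X = X" if "X \<in> Vr" for X
    using that idem unfolding Vr_def by (auto simp: matrix_vector_mul_assoc)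
  have sV: "subspace Vr" unfolding subspace_def
  proof (intro conjI ballI allI)
    show "0 \<in> Vr" unfolding Vr_def by (metis matrix_vector_mult_0_right rangeI)
    fix a b assume "a \<in> Vr" "b \<in> Vr"
    then obtain a' b' where "a = A *v a'" "b = A *v b'" unfolding Vr_def by blast
    thus "a + b \<in> Vr" unfolding Vr_def by (metis matrix_vector_right_distrib rangeI)
  next
    fix c :: real and a assume "a \<in> Vr"
    then obtain a' where "a = A *v a'" unfolding Vr_def by blast
    thus "c *\<^sub>R a \<in> Vr" unfolding Vr_def by (metis matrix_vector_mult_scaleR rangeI)
  qed
  have sK: "subspace K" unfolding K_def subspace_def
    by (simp add: matrix_vector_right_distrib matrix_vector_mult_scaleR)
  have VK0: "Vr \<inter> K = {0}"
  proof
    show "Vr \<inter> K \<subseteq> {0}" using fixV unfolding K_def by force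
    show "{0} \<subseteq> Vr \<inter> K" using subspace_0[OF sV] subspace_0[OF sK] by blast
  qed
  have decomp: "X = A *v X + (X - A *v X)" "A *v X \<in> Vr" "X - A *v X \<in> K" for X
    using idem unfolding Vr_def K_def
    by (auto simp: matrix_vector_mult_diff_distrib matrix_vector_mul_assoc)
  have sumall: "{x + y |x y. x \<in> Vr \<and> y \<in> K} = UNIV"
    using decomp by blast
  have dimsum: "dim Vr + dim K = CARD('n)"
    using dim_sums_Int[OF sV sK] unfolding sumall VK0 by simp
  obtain B1 where B1: "B1 \<subseteq> Vr" "independent B1" "Vr \<subseteq> span B1" "card B1 = dim Vr"
    using basis_exists by blast
  obtain B2 where B2: "B2 \<subseteq> K" "independent B2" "K \<subseteq> span B2" "card B2 = dim K"
    using basis_exists by blast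
  have fin1: "finite B1" using B1(2) independent_explicit by blast
  have fin2: "finite B2" using B2(2) independent_explicit by blast
  have disj: "B1 \<inter> B2 = {}"
  proof -
    have "B1 \<inter> B2 \<subseteq> {0}" using B1(1) B2(1) VK0 by blast
    moreover have "0 \<notin> B1" using B1(2) dependent_zero by blast
    ultimately show ?thesis by blast
  qed
  define B where "B = B1 \<union> B2"
  have finB: "finite B" using fin1 fin2 B_def by simp
  have cardB: "card B = CARD('n)" unfolding B_def
    using card_Un_disjoint[OF fin1 fin2 disj] B1(4) B2(4) dimsum by simp
  have spanB: "UNIV \<subseteq> span B"
  proof
    fix X :: "real^'n"
    have "A *v X \<in> span B" using B1(3) decomp(2) span_mono[of B1 B] B_def by blast
    moreover have "X - A *v X \<in> span B" using B2(3) decomp(3) span_mono[of B2 B] B_def by blast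
    ultimately have "A *v X + (X - A *v X) \<in> span B" by (rule span_add)
    thus "X \<in> span B" by simp
  qed
  have indB: "independent B"
    using card_eq_dim[of B UNIV] finB cardB spanB by simp
  obtain f where f: "bij_betw f (UNIV::'n set) B"
    using finite_same_card_bij[of "UNIV::'n set" B] finB cardB by auto
  define P where "P = (\<chi> r c. f c $ r)"
  have Pe: "P *v axis c 1 = f c" for c
    by (simp add: matrix_vector_mult_basis column_def P_def)
  have Pu: "P *v u = (\<Sum>c\<in>UNIV. u$c *\<^sub>R f c)" for u
    by (simp add: P_def matrix_vector_mult_def vec_eq_iff mult.commute)
  have injP: "inj ((*v) P)"
  proof -
    have "u = 0" if "P *v u = 0" for u
    proof -
      define cf where "cf v = u $ (inv_into UNIV f v)" for v
      have "(\<Sum>v\<in>B. cf v *\<^sub>R v) = (\<Sum>c\<in>UNIV. cf (f c) *\<^sub>R f c)"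
        using sum.reindex_bij_betw[OF f, of "\<lambda>v. cf v *\<^sub>R v"] by simp
      also have "\<dots> = (\<Sum>c\<in>UNIV. u$c *\<^sub>R f c)"
        using f by (simp add: cf_def bij_betw_inv_into_left)
      also have "\<dots> = 0" using that Pu by simp
      finally have "\<forall>v\<in>B. cf v = 0" using indB independent_explicit by blast
      have "u $ c = 0" for c
      proof -
        have "f c \<in> B" using f bij_betwE by blast
        hence "cf (f c) = 0" using \<open>\<forall>v\<in>B. cf v = 0\<close> by blast
        thus ?thesis using f by (simp add: cf_def bij_betw_inv_into_left)
      qed
      thus ?thesis by (simp add: vec_eq_iff)
    qed
    thus ?thesis by (simp add: inj_on_def) (metis eq_iff_diff_eq_0 matrix_vector_mult_diff_distrib)
  qed
  obtain Q where QP: "Q ** P = mat 1" using injP matrix_left_invertible_injective by blast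
  hence PQ: "P ** Q = mat 1" using matrix_left_right_inverse by blast
  define D where "D = Q ** (A ** P)"
  have "trace A = trace ((A ** P) ** Q)" by (simp add: matrix_mul_assoc[symmetric] PQ)
  also have "\<dots> = trace D" unfolding D_def by (rule trace_mul_sym)
  also have "D $ c $ c = (if f c \<in> B1 then 1 else 0)" for c
  proof -
    have "D $ c $ c = (D *v axis c 1) $ c" by (simp add: matrix_vector_mult_basis column_def)
    also have "D *v axis c 1 = Q *v (A *v f c)"
      by (simp add: D_def matrix_vector_mul_assoc[symmetric] Pe)
    also have "\<dots> = (if f c \<in> B1 then axis c 1 else 0)"
    proof (cases "f c \<in> B1")
      case True
      hence "A *v f c = f c" using fixV B1(1) by blast
      moreover have "Q *v f c = axis c 1" using QP by (simp flip: Pe add: matrix_vector_mul_assoc)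
      ultimately show ?thesis using True by simp
    next
      case False
      hence "f c \<in> B2" using f bij_betwE B_def by blast
      hence "A *v f c = 0" using B2(1) K_def by blast
      thus ?thesis using False by simp
    qed
    finally show ?thesis by (simp add: axis_def)
  qed
  hence "trace D = (\<Sum>c\<in>UNIV. if f c \<in> B1 then 1 else 0)" by (simp add: trace_def)
  also have "\<dots> = real (card {c. f c \<in> B1})" by (simp add: sum.If_cases)
  also have "card {c. f c \<in> B1} = card B1"
  proof -
    have "bij_betw f {c. f c \<in> B1} B1"
      using f B_def unfolding bij_betw_def inj_on_def by (auto simp: image_iff)
    thus ?thesis by (simp add: bij_betw_same_card)
  qed
  finally show ?thesis using B1(4) Vr_def by simp
qed


definition E3 :: "('n::finite \<Rightarrow> 'n \<Rightarrow> 'n \<Rightarrow> real) \<Rightarrow> real^'n \<Rightarrow> real^'n \<Rightarrow> real^'n \<Rightarrow> real" where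
  "E3 F X Y Z = (\<Sum>a\<in>UNIV. \<Sum>b\<in>UNIV. \<Sum>c\<in>UNIV. X$a * Y$b * Z$c * F a b c)"

lemma E3_swap12: "E3 (\<lambda>a b c. F b a c) X Y Z = E3 F Y X Z"
  unfolding E3_def by (subst sum.swap) (simp add: mult_ac)

lemma E3_swap23: "E3 (\<lambda>a b c. F a c b) X Y Z = E3 F X Z Y"
  unfolding E3_def by (rule sum.cong[OF refl], subst sum.swap) (simp add: mult_ac)

lemma E3_add: "E3 (\<lambda>a b c. F a b c + G a b c) X Y Z = E3 F X Y Z + E3 G X Y Z"
  unfolding E3_def by (simp add: distrib_left sum.distrib)

lemma E3_div: "E3 (\<lambda>a b c. F a b c / r) X Y Z = E3 F X Y Z / r"
  unfolding E3_def by (simp add: sum_divide_distrib)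

lemma sum_axis: "(\<Sum>i\<in>UNIV. axis a (1::real) $ i * f i) = f a"
proof -
  have "(\<Sum>i\<in>UNIV. axis a (1::real) $ i * f i) = (\<Sum>i\<in>UNIV. if i = a then f a else 0)"
    by (rule sum.cong) (auto simp: axis_def)
  thus ?thesis by simp
qed

lemma E3_sym3: "E3 (sym3 F) X Y Z =
   (E3 F X Y Z + E3 F X Z Y + E3 F Y X Z + E3 F Y Z X + E3 F Z X Y + E3 F Z Y X) / 6"
proof -
  have 1: "E3 (\<lambda>a b c. F b c a) X Y Z = E3 F Y Z X" for X Y Z
    using E3_swap12[of "\<lambda>a b c. F a c b" X Y Z] E3_swap23[of F Y X Z] by simp
  have 2: "E3 (\<lambda>a b c. F c a b) X Y Z = E3 F Z X Y" for X Y Z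
    using E3_swap23[of "\<lambda>a b c. F b a c" X Y Z] E3_swap12[of F X Z Y] by simp
  have 3: "E3 (\<lambda>a b c. F c b a) X Y Z = E3 F Z Y X"
    using E3_swap12[of "\<lambda>a b c. F c a b" X Y Z] 2[of Y X Z] by simp
  have s: "sym3 F = (\<lambda>a b c. (F a b c + F a c b + F b a c + F b c a + F c a b + F c b a) / 6)"
    unfolding sym3_def by (intro ext) simp
  show ?thesis unfolding s E3_div E3_add
    using E3_swap12[of F X Y Z] E3_swap23[of F X Y Z] 1[of X Y Z] 2[of X Y Z] 3 by simp
qed

lemma E3_axis: "E3 F (axis a 1) (axis b 1) (axis c 1) = F a b c"
proof -
  have "E3 F (axis a 1) (axis b 1) (axis c 1) = (\<Sum>aa\<in>UNIV. axis a 1 $ aa * (\<Sum>ba\<in>UNIV. axis b 1 $ ba * (\<Sum>ca\<in>UNIV. axis c 1 $ ca * F aa ba ca)))"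
    unfolding E3_def by (simp add: sum_distrib_left mult.assoc)
  also have "\<dots> = F a b c" by (simp only: sum_axis)
  finally show ?thesis .
qed


lemma vec_expand: "X = (\<Sum>j\<in>UNIV. X$j *\<^sub>R axis j (1::real))"
  using basis_expansion[of X] by (simp add: scalar_mult_eq_scaleR)

lemma mv_sum: "(M::real^'n::finite^'m::finite) *v (\<Sum>j\<in>S. f j) = (\<Sum>j\<in>S. M *v f j)"
  using linear_sum[OF matrix_vector_mul_linear[of M], of f S] by (simp add: o_def)

locale ptalg =
  fixes GM A :: "real^'n::finite^'n" and NN :: "'n \<Rightarrow> real^'n^'n"
  assumes sG: "transpose GM = GM" and iG: "invertible GM"
    and idem: "\<And>Y. A *v (A *v Y) = A *v Y"
    and sa: "\<And>X Y. (A *v X) \<bullet> (GM *v Y) = X \<bullet> (GM *v (A *v Y))"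
    and nA: "\<And>k Y. NN k *v (A *v Y) + A *v (NN k *v Y) = NN k *v Y"
    and nS: "\<And>k Y Z. (NN k *v Y) \<bullet> (GM *v Z) = (NN k *v Z) \<bullet> (GM *v Y)"
begin

definition "bil X Y = X \<bullet> (GM *v Y)"
definition "Hv Y = Y - A *v Y"
definition "NNv X Y = (\<Sum>c\<in>UNIV. X$c *\<^sub>R (NN c *v Y))"
definition "tri X Y Z = bil (NNv X Y) Z"
definition "QV X Y = NNv (A *v X) (A *v Y)"
definition "QH X Y = NNv (Hv X) (Hv Y)"

lemma bil_sym: "bil X Y = bil Y X"
  unfolding bil_def by (rule inner_sym_matrix[OF sG])

lemma bil_add1: "bil (X + Y) Z = bil X Z + bil Y Z" unfolding bil_def by (simp add: inner_add_left)
lemma bil_add2: "bil Z (X + Y) = bil Z X + bil Z Y" unfolding bil_def by (simp add: inner_add_right matrix_vector_right_distrib)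
lemma bil_diff1: "bil (X - Y) Z = bil X Z - bil Y Z" unfolding bil_def by (simp add: inner_diff_left)
lemma bil_diff2: "bil Z (X - Y) = bil Z X - bil Z Y" unfolding bil_def by (simp add: inner_diff_right matrix_vector_mult_diff_distrib)
lemma bil_scale1: "bil (c *\<^sub>R X) Z = c * bil X Z" unfolding bil_def by simp
lemma bil_scale2: "bil Z (c *\<^sub>R X) = c * bil Z X" unfolding bil_def by (simp add: matrix_vector_mult_scaleR)
lemma bil_01[simp]: "bil 0 Z = 0" unfolding bil_def by simp
lemma bil_02[simp]: "bil Z 0 = 0" unfolding bil_def by simp
lemma bil_sum1: "bil (\<Sum>j\<in>S. f j) Z = (\<Sum>j\<in>S. bil (f j) Z)" unfolding bil_def by (simp add: inner_sum_left)

lemma bil_nd: assumes "\<And>Z. bil W Z = 0" shows "W = 0"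
proof -
  have "bil W (matrix_inv GM *v W) = 0" by (rule assms)
  hence "W \<bullet> W = 0" unfolding bil_def
    by (simp add: matrix_vector_mul_assoc matrix_inv_both[OF iG])
  thus ?thesis by simp
qed

lemma bil_A: "bil (A *v X) Y = bil X (A *v Y)" unfolding bil_def by (rule sa)
lemma Hv_idem: "Hv (Hv Y) = Hv Y" unfolding Hv_def by (simp add: matrix_vector_mult_diff_distrib idem)
lemma AH: "A *v (Hv Y) = 0" unfolding Hv_def by (simp add: matrix_vector_mult_diff_distrib idem)
lemma HA: "Hv (A *v Y) = 0" unfolding Hv_def by (simp add: idem)
lemma decomp: "A *v Y + Hv Y = Y" unfolding Hv_def by simp
lemma Hv_add: "Hv (X + Y) = Hv X + Hv Y" unfolding Hv_def by (simp add: matrix_vector_right_distrib)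
lemma Hv_0[simp]: "Hv 0 = 0" unfolding Hv_def by simp
lemma bil_H: "bil (Hv X) Y = bil X (Hv Y)" unfolding Hv_def by (simp add: bil_diff1 bil_diff2 bil_A)

lemma NNv_add1: "NNv (X1 + X2) Y = NNv X1 Y + NNv X2 Y"
  unfolding NNv_def by (simp add: scaleR_add_left sum.distrib)
lemma NNv_add2: "NNv X (Y1 + Y2) = NNv X Y1 + NNv X Y2"
  unfolding NNv_def by (simp add: matrix_vector_right_distrib scaleR_add_right sum.distrib)
lemma NNv_diff2: "NNv X (Y1 - Y2) = NNv X Y1 - NNv X Y2"
  unfolding NNv_def by (simp add: matrix_vector_mult_diff_distrib scaleR_diff_right sum_subtractf)
lemma NNv_01[simp]: "NNv 0 Y = 0" unfolding NNv_def by simp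
lemma NNv_02[simp]: "NNv X 0 = 0" unfolding NNv_def by simp

lemma NNv_A: "NNv X (A *v Y) + A *v (NNv X Y) = NNv X Y"
proof -
  have "NNv X (A *v Y) + A *v (NNv X Y) = (\<Sum>c\<in>UNIV. X$c *\<^sub>R (NN c *v (A *v Y) + A *v (NN c *v Y)))"
    unfolding NNv_def by (simp add: mv_sum matrix_vector_mult_scaleR scaleR_add_right sum.distrib)
  also have "\<dots> = NNv X Y" unfolding NNv_def nA ..
  finally show ?thesis .
qed

lemma NNv_S: "bil (NNv X Y) Z = bil (NNv X Z) Y"
  unfolding NNv_def bil_sum1 bil_scale1 using nS unfolding bil_def by simp

lemma ANA: "A *v (NNv X (A *v Y)) = 0"
proof -
  have "A *v (NNv X (A *v Y)) + A *v (A *v (NNv X Y)) = A *v (NNv X Y)"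
    using NNv_A[of X Y] by (metis matrix_vector_right_distrib)
  thus ?thesis by (simp add: idem)
qed

lemma HNA: "Hv (NNv X (A *v Y)) = NNv X (A *v Y)"
  unfolding Hv_def using ANA by simp

lemma HNH: "Hv (NNv X (Hv Y)) = 0"
proof -
  have "NNv X (Hv Y) = NNv X Y - NNv X (A *v Y)" unfolding Hv_def by (rule NNv_diff2)
  also have "\<dots> = A *v (NNv X Y)" using NNv_A[of X Y] by (simp add: algebra_simps)
  finally show ?thesis by (simp add: HA)
qed

lemma ANH: "A *v (NNv X (Hv Y)) = NNv X (Hv Y)"
  using HNH[of X Y] unfolding Hv_def by simp

lemma tri_AA: "tri X (A *v Y) (A *v Z) = 0"
  unfolding tri_def by (simp add: bil_A[symmetric] ANA)

lemma tri_HH: "tri X (Hv Y) (Hv Z) = 0"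
  unfolding tri_def by (simp add: bil_H[symmetric] HNH)

lemma tri_sym: "tri X Y Z = tri X Z Y" unfolding tri_def by (rule NNv_S)

lemma tri_expand: "tri X Y Z = bil (QV X Y) (Hv Z) + bil (QH X Z) (A *v Y) + bil (QV X Z) (Hv Y) + bil (QH X Y) (A *v Z)"
proof -
  have Y: "Y = A *v Y + Hv Y" and Z: "Z = A *v Z + Hv Z" and X: "X = A *v X + Hv X" using decomp by auto
  have "tri X Y Z = tri X (A *v Y) (Hv Z) + tri X (Hv Y) (A *v Z)"
  proof -
    have "tri X Y Z = tri X (A *v Y) (A *v Z) + tri X (A *v Y) (Hv Z) + tri X (Hv Y) (A *v Z) + tri X (Hv Y) (Hv Z)"
      unfolding tri_def by (subst Y, subst Z) (simp add: NNv_add2 bil_add1 bil_add2)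
    thus ?thesis by (simp add: tri_AA tri_HH)
  qed
  also have "tri X (Hv Y) (A *v Z) = tri X (A *v Z) (Hv Y)" by (rule tri_sym)
  also have "tri X (A *v Y) (Hv Z) = bil (QV X Y) (Hv Z) + bil (QH X Z) (A *v Y)"
  proof -
    have "tri X (A *v Y) (Hv Z) = bil (NNv (A *v X) (A *v Y)) (Hv Z) + bil (NNv (Hv X) (A *v Y)) (Hv Z)"
      unfolding tri_def by (subst X) (simp add: NNv_add1 bil_add1)
    also have "bil (NNv (Hv X) (A *v Y)) (Hv Z) = bil (NNv (Hv X) (Hv Z)) (A *v Y)" by (rule NNv_S)
    finally show ?thesis unfolding QV_def QH_def by (simp add: idem Hv_idem)
  qed
  also have "tri X (A *v Z) (Hv Y) = bil (QV X Z) (Hv Y) + bil (QH X Y) (A *v Z)"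
  proof -
    have "tri X (A *v Z) (Hv Y) = bil (NNv (A *v X) (A *v Z)) (Hv Y) + bil (NNv (Hv X) (A *v Z)) (Hv Y)"
      unfolding tri_def by (subst X) (simp add: NNv_add1 bil_add1)
    also have "bil (NNv (Hv X) (A *v Z)) (Hv Y) = bil (NNv (Hv X) (Hv Y)) (A *v Z)" by (rule NNv_S)
    finally show ?thesis unfolding QV_def QH_def by (simp add: idem Hv_idem)
  qed
  finally show ?thesis by simp
qed

lemma dir1:
  assumes "QV X Y + QV Y X = 0" "QV Y Z + QV Z Y = 0" "QV Z X + QV X Z = 0"
    and "QH X Y + QH Y X = 0" "QH Y Z + QH Z Y = 0" "QH Z X + QH X Z = 0"
  shows "tri X Y Z + tri Y Z X + tri Z X Y = 0"
proof -
  have e1: "bil (QV X Y) W + bil (QV Y X) W = 0" for W using assms(1) by (simp add: bil_add1[symmetric])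
  have e2: "bil (QV Y Z) W + bil (QV Z Y) W = 0" for W using assms(2) by (simp add: bil_add1[symmetric])
  have e3: "bil (QV Z X) W + bil (QV X Z) W = 0" for W using assms(3) by (simp add: bil_add1[symmetric])
  have e4: "bil (QH X Y) W + bil (QH Y X) W = 0" for W using assms(4) by (simp add: bil_add1[symmetric])
  have e5: "bil (QH Y Z) W + bil (QH Z Y) W = 0" for W using assms(5) by (simp add: bil_add1[symmetric])
  have e6: "bil (QH Z X) W + bil (QH X Z) W = 0" for W using assms(6) by (simp add: bil_add1[symmetric])
  show ?thesis unfolding tri_expand[of X Y Z] tri_expand[of Y Z X] tri_expand[of Z X Y]
    using e1[of "Hv Z"] e2[of "Hv X"] e3[of "Hv Y"] e4[of "A *v Z"] e5[of "A *v X"] e6[of "A *v Y"]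
    by linarith
qed

lemma QV_add: "QV (X + Y) (X + Y) = QV X X + QV X Y + QV Y X + QV Y Y"
  unfolding QV_def by (simp add: matrix_vector_right_distrib NNv_add1 NNv_add2)
lemma QH_add: "QH (X + Y) (X + Y) = QH X X + QH X Y + QH Y X + QH Y Y"
  unfolding QH_def by (simp add: Hv_add NNv_add1 NNv_add2)

lemma dir2:
  assumes m: "\<And>X Y Z. tri X Y Z + tri Y Z X + tri Z X Y = 0"
  shows "QV X Y + QV Y X = 0" "QH X Y + QH Y X = 0"
proof -
  have qv0: "QV X X = 0" for X
  proof -
    define P where "P = A *v X"
    have AP: "A *v P = P" and HP: "Hv P = 0" unfolding P_def by (simp_all add: idem HA)
    have "bil (QV X X) (Hv W) = 0" for W
    proof -
      define Q where "Q = Hv W"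
      have AQ: "A *v Q = 0" and HQ: "Hv Q = Q" unfolding Q_def by (simp_all add: AH Hv_idem)
      have "tri P P Q = bil (QV P P) Q" unfolding tri_expand QH_def
        by (simp add: AP HP AQ HQ)
      moreover have "tri P Q P = tri P P Q" by (rule tri_sym)
      moreover have "tri Q P P = 0" unfolding tri_expand QV_def QH_def by (simp add: AP HP AQ HQ)
      ultimately have "2 * bil (QV P P) Q = 0" using m[of P P Q] by simp
      moreover have "QV P P = QV X X" unfolding QV_def P_def by (simp add: idem)
      ultimately show ?thesis unfolding Q_def by simp
    qed
    hence "bil (QV X X) Z = 0" for Z
    proof -
      have "bil (QV X X) Z = bil (Hv (QV X X)) Z" unfolding QV_def by (simp add: HNA)
      also have "\<dots> = bil (QV X X) (Hv Z)" by (rule bil_H)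
      finally show ?thesis using \<open>\<And>W. bil (QV X X) (Hv W) = 0\<close> by simp
    qed
    thus ?thesis by (rule bil_nd)
  qed
  show "QV X Y + QV Y X = 0" using QV_add[of X Y] qv0[of X] qv0[of Y] qv0[of "X + Y"] by simp
  have qh0: "QH X X = 0" for X
  proof -
    define P where "P = Hv X"
    have AP: "A *v P = 0" and HP: "Hv P = P" unfolding P_def by (simp_all add: AH Hv_idem)
    have "bil (QH X X) (A *v W) = 0" for W
    proof -
      define Q where "Q = A *v W"
      have AQ: "A *v Q = Q" and HQ: "Hv Q = 0" unfolding Q_def by (simp_all add: idem HA)
      have "tri P P Q = bil (QH P P) Q" unfolding tri_expand QV_def
        by (simp add: AP HP AQ HQ)
      moreover have "tri P Q P = tri P P Q" by (rule tri_sym)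
      moreover have "tri Q P P = 0" unfolding tri_expand QV_def QH_def by (simp add: AP HP AQ HQ)
      ultimately have "2 * bil (QH P P) Q = 0" using m[of P P Q] by simp
      moreover have "QH P P = QH X X" unfolding QH_def P_def by (simp add: Hv_idem)
      ultimately show ?thesis unfolding Q_def by simp
    qed
    hence "bil (QH X X) Z = 0" for Z
    proof -
      have "bil (QH X X) Z = bil (A *v (QH X X)) Z" unfolding QH_def by (simp add: ANH)
      also have "\<dots> = bil (QH X X) (A *v Z)" by (rule bil_A)
      finally show ?thesis using \<open>\<And>W. bil (QH X X) (A *v W) = 0\<close> by simp
    qed
    thus ?thesis by (rule bil_nd)
  qed
  show "QH X Y + QH Y X = 0" using QH_add[of X Y] qh0[of X] qh0[of Y] qh0[of "X + Y"] by simp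
qed

end

context ptalg begin

definition "tc a b c = tri (axis a 1) (axis b 1) (axis c 1)"

lemma bil_sum2: "bil Z (\<Sum>j\<in>S. f j) = (\<Sum>j\<in>S. bil Z (f j))"
  unfolding bil_def by (simp add: mv_sum inner_sum_right)

lemma tri_E3: "tri X Y Z = E3 tc X Y Z"
proof -
  have nv: "NNv (axis a 1) Y = NN a *v Y" for a Y
  proof -
    have "NNv (axis a 1) Y = (\<Sum>c\<in>UNIV. if c = a then NN a *v Y else 0)"
      unfolding NNv_def by (rule sum.cong) (auto simp: axis_def)
    thus ?thesis by simp
  qed
  have t1: "tri X Y Z = (\<Sum>a\<in>UNIV. X$a * bil (NN a *v Y) Z)"
    unfolding tri_def NNv_def bil_sum1 bil_scale1 ..
  have t2: "bil (NN a *v Y) Z = (\<Sum>b\<in>UNIV. Y$b * (\<Sum>c\<in>UNIV. Z$c * bil (NN a *v axis b 1) (axis c 1)))" for a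
  proof -
    have "bil (NN a *v Y) Z = bil (\<Sum>b\<in>UNIV. Y$b *\<^sub>R (NN a *v axis b 1)) (\<Sum>c\<in>UNIV. Z$c *\<^sub>R axis c 1)"
      by (subst vec_expand[of Y], subst vec_expand[of Z]) (simp add: mv_sum matrix_vector_mult_scaleR)
    also have "\<dots> = (\<Sum>c\<in>UNIV. Z$c * (\<Sum>b\<in>UNIV. Y$b * bil (NN a *v axis b 1) (axis c 1)))"
      by (simp add: bil_sum1 bil_sum2 bil_scale1 bil_scale2)
    also have "\<dots> = (\<Sum>b\<in>UNIV. Y$b * (\<Sum>c\<in>UNIV. Z$c * bil (NN a *v axis b 1) (axis c 1)))"
      apply (simp only: sum_distrib_left)
      apply (subst sum.swap)
      apply (simp add: mult_ac)
      done
    finally show ?thesis .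
  qed
  have tcv: "tc a b c = bil (NN a *v axis b 1) (axis c 1)" for a b c
    unfolding tc_def tri_def nv ..
  have "tri X Y Z = (\<Sum>a\<in>UNIV. X$a * (\<Sum>b\<in>UNIV. Y$b * (\<Sum>c\<in>UNIV. Z$c * tc a b c)))"
    unfolding t1 t2 tcv ..
  also have "\<dots> = E3 tc X Y Z" unfolding E3_def by (simp add: sum_distrib_left mult.assoc)
  finally show ?thesis .
qed

lemma msum_E3: "E3 (sym3 tc) X Y Z = (tri X Y Z + tri Y Z X + tri Z X Y) / 3"
  unfolding E3_sym3 tri_E3[symmetric] using tri_sym[of X Z Y] tri_sym[of Y X Z] tri_sym[of Z Y X] by simp

lemma TG_iff:
  "(\<forall>a b. QV (axis a 1) (axis b 1) + QV (axis b 1) (axis a 1) = 0 \<and>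
          QH (axis a 1) (axis b 1) + QH (axis b 1) (axis a 1) = 0) \<longleftrightarrow> (\<forall>a b c. sym3 tc a b c = 0)"
proof
  assume h: "\<forall>a b. QV (axis a 1) (axis b 1) + QV (axis b 1) (axis a 1) = 0 \<and>
          QH (axis a 1) (axis b 1) + QH (axis b 1) (axis a 1) = 0"
  show "\<forall>a b c. sym3 tc a b c = 0"
  proof (intro allI)
    fix a b c
    have "sym3 tc a b c = E3 (sym3 tc) (axis a 1) (axis b 1) (axis c 1)" by (simp only: E3_axis)
    also have "\<dots> = 0" unfolding msum_E3 using dir1 h by simp
    finally show "sym3 tc a b c = 0" .
  qed
next
  assume h: "\<forall>a b c. sym3 tc a b c = 0"
  have "tri X Y Z + tri Y Z X + tri Z X Y = 0" for X Y Z
  proof -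
    have "E3 (sym3 tc) X Y Z = 0" unfolding E3_def using h by simp
    thus ?thesis unfolding msum_E3 by simp
  qed
  thus "\<forall>a b. QV (axis a 1) (axis b 1) + QV (axis b 1) (axis a 1) = 0 \<and>
          QH (axis a 1) (axis b 1) + QH (axis b 1) (axis a 1) = 0"
    using dir2 by blast
qed

lemma conf_part:
  assumes TT: "\<And>Y. T (T Y) = T Y" and Tsa: "\<And>X Y. bil (T X) Y = bil X (T Y)"
    and h: "\<And>X Y Z. bil (T X) (T Y) * (T Z \<bullet> sv) + bil (T Y) (T Z) * (T X \<bullet> sv) + bil (T Z) (T X) * (T Y \<bullet> sv) = 0"
  shows "T W \<bullet> sv = 0"
proof (rule ccontr)
  assume ne: "T W \<bullet> sv \<noteq> 0"
  have "bil (T W) (T W) * (T W \<bullet> sv) = 0" using h[of W W W] by auto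
  hence PP: "bil (T W) (T W) = 0" using ne mult_eq_0_iff by blast
  have TX: "bil (T X) (T W) = 0" for X
  proof -
    have "bil (T X) (T W) * (T W \<bullet> sv) = 0" using h[of X W W] PP bil_sym[of "T W" "T X"] by auto
    thus ?thesis using ne mult_eq_0_iff by blast
  qed
  have "bil Z (T W) = 0" for Z
  proof -
    have "bil Z (T W) = bil Z (T (T W))" using TT by simp
    also have "\<dots> = bil (T Z) (T W)" using Tsa by simp
    finally show ?thesis using TX by simp
  qed
  hence "T W = 0" using bil_nd bil_sym by metis
  thus False using ne by simp
qed

lemma E3_gs: "E3 (\<lambda>a b c. GM$a$b * s c) X Y Z = bil X Y * (Z \<bullet> (\<chi> c. s c))"
  unfolding E3_def bil_def inner_vec_def matrix_vector_mult_def
  by (simp add: sum_distrib_left sum_distrib_right mult_ac)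

lemma conf:
  assumes h: "\<forall>a b c. sym3 tc a b c = sym3 (\<lambda>a b c. GM$a$b * s c) a b c"
  shows "\<forall>a b c. sym3 tc a b c = 0"
proof -
  define sv :: "real^'n" where "sv = (\<chi> c. s c)"
  have eq: "sym3 tc = sym3 (\<lambda>a b c. GM$a$b * s c)" using h by (intro ext) simp
  have key: "tri X Y Z + tri Y Z X + tri Z X Y = bil X Y * (Z \<bullet> sv) + bil Y Z * (X \<bullet> sv) + bil Z X * (Y \<bullet> sv)" for X Y Z
  proof -
    have "(tri X Y Z + tri Y Z X + tri Z X Y) / 3 = E3 (sym3 (\<lambda>a b c. GM$a$b * s c)) X Y Z"
      unfolding msum_E3[symmetric] eq ..
    also have "\<dots> = (bil X Y * (Z \<bullet> sv) + bil Y Z * (X \<bullet> sv) + bil Z X * (Y \<bullet> sv)) / 3"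
      unfolding E3_sym3 E3_gs sv_def[symmetric] using bil_sym[of X Z] bil_sym[of Y X] bil_sym[of Z Y] by simp
    finally show ?thesis by simp
  qed
  have sA: "(A *v W) \<bullet> sv = 0" for W
  proof (rule conf_part[where T="(*v) A"])
    show "A *v (A *v Y) = A *v Y" for Y by (rule idem)
    show "bil (A *v X) Y = bil X (A *v Y)" for X Y by (rule bil_A)
    show "bil (A *v X) (A *v Y) * ((A *v Z) \<bullet> sv) + bil (A *v Y) (A *v Z) * ((A *v X) \<bullet> sv) + bil (A *v Z) (A *v X) * ((A *v Y) \<bullet> sv) = 0" for X Y Z
      using key[of "A *v X" "A *v Y" "A *v Z"] tri_AA by simp
  qed
  have sH: "(Hv W) \<bullet> sv = 0" for W
  proof (rule conf_part[where T="Hv"])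
    show "Hv (Hv Y) = Hv Y" for Y by (rule Hv_idem)
    show "bil (Hv X) Y = bil X (Hv Y)" for X Y by (rule bil_H)
    show "bil (Hv X) (Hv Y) * ((Hv Z) \<bullet> sv) + bil (Hv Y) (Hv Z) * ((Hv X) \<bullet> sv) + bil (Hv Z) (Hv X) * ((Hv Y) \<bullet> sv) = 0" for X Y Z
      using key[of "Hv X" "Hv Y" "Hv Z"] tri_HH by simp
  qed
  have "W \<bullet> sv = 0" for W
    using sA[of W] sH[of W] decomp[of W] by (metis add.right_neutral inner_add_left)
  hence "sv = 0" by (metis inner_eq_zero_iff)
  hence s0: "s c = 0" for c unfolding sv_def by (metis vec_lambda_beta zero_index)
  show ?thesis using h by (simp add: s0 sym3_def)
qed

end

lemma sum_axis_r: "(\<Sum>i\<in>UNIV. f i * axis a (1::real) $ i) = f a"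
  using sum_axis[of a f] by (simp add: mult.commute)

lemma vcov_eq: "vcov g V y b c = (\<Sum>i\<in>UNIV. vmat g V y $ i $ b * g y i c)"
proof -
  have "vcov g V y b c = (\<Sum>i\<in>UNIV. \<Sum>j\<in>UNIV. (vmat g V y *v axis b 1) $ i * g y i j * axis c 1 $ j)"
    unfolding vcov_def gform_def ..
  also have "\<dots> = (\<Sum>i\<in>UNIV. (vmat g V y *v axis b 1) $ i * g y i c)"
    by (simp only: sum_axis_r)
  also have "\<dots> = (\<Sum>i\<in>UNIV. vmat g V y $ i $ b * g y i c)"
    by (simp add: matrix_vector_mult_basis column_def)
  finally show ?thesis .
qed

lemma hcov_eq: "hcov g V y b c = g y b c - vcov g V y b c"
proof -
  have "hcov g V y b c = gform g y (axis b 1 - vmat g V y *v axis b 1) (axis c 1)"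
    unfolding hcov_def hmat_def by (simp add: matrix_vector_mult_diff_rdistrib)
  also have "\<dots> = gform g y (axis b 1) (axis c 1) - vcov g V y b c"
    unfolding vcov_def gform_def by (simp add: left_diff_distrib sum_subtractf)
  also have "gform g y (axis b 1) (axis c 1) = g y b c"
    unfolding gform_def by (simp only: sum_axis_r sum_axis)
  finally show ?thesis .
qed

locale ptpoint =
  fixes U :: "(real^'n::finite) set" and g :: "'n tensor2" and V :: "real^'n \<Rightarrow> (real^'n) set" and x :: "real^'n"
  assumes oU: "open U" and xU: "x \<in> U"
    and gsym: "\<And>y i j. y \<in> U \<Longrightarrow> g y i j = g y j i"
    and gdet: "\<And>y. y \<in> U \<Longrightarrow> det (\<chi> a b. g y a b) \<noteq> 0"
    and gdiff: "\<And>i j. (\<lambda>y. g y i j) differentiable (at x)"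
    and Vsub: "\<And>y. y \<in> U \<Longrightarrow> subspace (V y)"
    and Vnd: "\<And>y. y \<in> U \<Longrightarrow> \<forall>X\<in>V y. (\<forall>Y\<in>V y. gform g y X Y = 0) \<longrightarrow> X = 0"
    and Adiff: "\<And>i j. (\<lambda>y. vmat g V y $ i $ j) differentiable (at x)"
begin

definition "GM = (\<chi> i j. g x i j)"
definition "AM = vmat g V x"
definition "gd k i j = pd (\<lambda>y. g y i j) k x"
definition "Ad k = (\<chi> i j. pd (\<lambda>y. vmat g V y $ i $ j) k x)"
definition "Gam k = (\<chi> i j. christ g x i k j)"
definition "NN k = Ad k + (Gam k ** AM - AM ** Gam k)"

lemma props_at: assumes "y \<in> U"
  shows "vmat g V y ** vmat g V y = vmat g V y"
    and "transpose (vmat g V y) ** (\<chi> a b. g y a b) = (\<chi> a b. g y a b) ** vmat g V y"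
    and "range ((*v) (vmat g V y)) = V y"
proof -
  have h1: "\<forall>i j. g y i j = g y j i" using gsym[OF assms] by blast
  note vp = vmat_props[of g y V, OF h1 gdet[OF assms] Vsub[OF assms] Vnd[OF assms]]
  show "vmat g V y ** vmat g V y = vmat g V y" by (rule vp(3))
  show "transpose (vmat g V y) ** (\<chi> a b. g y a b) = (\<chi> a b. g y a b) ** vmat g V y" by (rule vp(4))
  show "range ((*v) (vmat g V y)) = V y" by (rule vp(5))
qed

lemma sG: "transpose GM = GM"
proof -
  have "transpose GM $ i $ j = GM $ i $ j" for i j
    unfolding transpose_def GM_def by (simp add: gsym[OF xU, of j i])
  thus ?thesis by (simp add: vec_eq_iff)
qed
lemma iG: "invertible GM" unfolding GM_def invertible_det_nz by (rule gdet[OF xU])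

lemma gd_sym: "gd k i j = gd k j i"
  unfolding gd_def by (rule pd_cong[OF oU xU]) (rule gsym)

lemma line_g: "((\<lambda>t. g (x + t *\<^sub>R axis k 1) i j) has_real_derivative gd k i j) (at 0)"
  unfolding gd_def using pd_has[OF gdiff] .
lemma line_A: "((\<lambda>t. vmat g V (x + t *\<^sub>R axis k 1) $ i $ j) has_real_derivative Ad k $ i $ j) (at 0)"
  unfolding Ad_def using pd_has[OF Adiff] by simp

lemma christ_eq: "christ g x e a b = (1/2) * (\<Sum>d\<in>UNIV. matrix_inv GM $ e $ d * (gd a d b + gd b d a - gd d a b))"
  unfolding christ_def ginv_def gd_def GM_def ..

lemma christ_sym: "christ g x e a b = christ g x e b a"
  unfolding christ_eq using gd_sym by (simp add: add.commute)

lemma sum_mat1: "(\<Sum>d\<in>UNIV. (mat 1 :: real^'n^'n) $ c $ d * f d) = f c"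
proof -
  have "(\<Sum>d\<in>UNIV. (mat 1 :: real^'n^'n) $ c $ d * f d) = (\<Sum>d\<in>UNIV. if d = c then f c else 0)"
    by (rule sum.cong) (auto simp: mat_def)
  thus ?thesis by simp
qed

lemma christ_low: "(\<Sum>e\<in>UNIV. christ g x e a b * g x e c) = (1/2) * (gd a c b + gd b c a - gd c a b)"
proof -
  define F where "F d = gd a d b + gd b d a - gd d a b" for d
  have ce: "christ g x e a b * g x e c = (1/2) * (\<Sum>d\<in>UNIV. GM$c$e * matrix_inv GM $ e $ d * F d)" for e
  proof -
    have "g x e c = GM$c$e" unfolding GM_def using gsym[OF xU, of e c] by simp
    thus ?thesis unfolding christ_eq F_def[symmetric] by (simp add: sum_distrib_left sum_distrib_right mult_ac)
  qed
  have "(\<Sum>e\<in>UNIV. christ g x e a b * g x e c) = (1/2) * (\<Sum>e\<in>UNIV. \<Sum>d\<in>UNIV. GM$c$e * matrix_inv GM $ e $ d * F d)"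
    unfolding ce by (simp add: sum_distrib_left)
  also have "(\<Sum>e\<in>UNIV. \<Sum>d\<in>UNIV. GM$c$e * matrix_inv GM $ e $ d * F d) = (\<Sum>d\<in>UNIV. (GM ** matrix_inv GM) $ c $ d * F d)"
    by (subst sum.swap) (simp add: matrix_matrix_mult_def sum_distrib_right)
  also have "\<dots> = F c" unfolding matrix_inv_both(1)[OF iG] by (rule sum_mat1)
  finally show ?thesis unfolding F_def .
qed

lemma metric_compat: "gd a i c = (\<Sum>e\<in>UNIV. christ g x e a i * g x e c) + (\<Sum>e\<in>UNIV. christ g x e a c * g x i e)"
proof -
  have "(\<Sum>e\<in>UNIV. christ g x e a c * g x i e) = (\<Sum>e\<in>UNIV. christ g x e a c * g x e i)"
    using gsym[OF xU] by simp
  hence 2: "(\<Sum>e\<in>UNIV. christ g x e a c * g x i e) = (1/2) * (gd a i c + gd c i a - gd i a c)"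
    using christ_low[of a c i] by simp
  have 1: "(\<Sum>e\<in>UNIV. christ g x e a i * g x e c) = (1/2) * (gd a c i + gd i c a - gd c a i)"
    by (rule christ_low)
  show ?thesis unfolding 1 2 using gd_sym[of a c i] gd_sym[of i c a] gd_sym[of c a i] by (simp add: field_simps)
qed

lemma cov2_g: "cov2 g g x a b c = 0"
  unfolding cov2_def using metric_compat[of a b c] gd_def by simp

end

context ptpoint begin

lemma line_v: "((\<lambda>t. vcov g V (x + t *\<^sub>R axis a 1) b c) has_real_derivative
   (\<Sum>i\<in>UNIV. Ad a $ i $ b * g x i c + AM $ i $ b * gd a i c)) (at 0)"
proof -
  have "((\<lambda>t. \<Sum>i\<in>UNIV. vmat g V (x + t *\<^sub>R axis a 1) $ i $ b * g (x + t *\<^sub>R axis a 1) i c) has_real_derivative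
     (\<Sum>i\<in>UNIV. Ad a $ i $ b * g (x + 0 *\<^sub>R axis a 1) i c + gd a i c * vmat g V (x + 0 *\<^sub>R axis a 1) $ i $ b)) (at 0)"
    by (intro DERIV_sum DERIV_mult line_A line_g)
  thus ?thesis unfolding vcov_eq AM_def by (simp add: mult.commute)
qed

lemma pd_v: "pd (\<lambda>y. vcov g V y b c) a x = (\<Sum>i\<in>UNIV. Ad a $ i $ b * g x i c + AM $ i $ b * gd a i c)"
  by (rule pd_eq[OF line_v])

lemma vx: "vcov g V x b c = (\<Sum>i\<in>UNIV. AM $ i $ b * g x i c)"
  unfolding vcov_eq AM_def ..

lemma cov2_v: "cov2 g (vcov g V) x a b c = (\<Sum>i\<in>UNIV. NN a $ i $ b * g x i c)"
proof -
  have T2: "(\<Sum>i\<in>UNIV. AM$i$b * (\<Sum>e\<in>UNIV. christ g x e a c * g x i e)) = (\<Sum>e\<in>UNIV. christ g x e a c * vcov g V x b e)"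
    unfolding vx
    apply (simp only: sum_distrib_left)
    apply (subst sum.swap)
    apply (simp add: mult_ac)
    done
  have T1: "(\<Sum>i\<in>UNIV. AM$i$b * (\<Sum>e\<in>UNIV. christ g x e a i * g x e c)) = (\<Sum>i\<in>UNIV. (Gam a ** AM)$i$b * g x i c)"
    unfolding Gam_def matrix_matrix_mult_def
    apply (simp only: vec_lambda_beta sum_distrib_left sum_distrib_right)
    apply (subst sum.swap)
    apply (simp add: mult_ac)
    done
  have T3: "(\<Sum>e\<in>UNIV. christ g x e a b * vcov g V x e c) = (\<Sum>i\<in>UNIV. (AM ** Gam a)$i$b * g x i c)"
    unfolding vx Gam_def matrix_matrix_mult_def
    apply (simp only: vec_lambda_beta sum_distrib_left sum_distrib_right)
    apply (subst sum.swap)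
    apply (simp add: mult_ac)
    done
  have MC: "(\<Sum>i\<in>UNIV. AM $ i $ b * gd a i c) = (\<Sum>i\<in>UNIV. AM$i$b * (\<Sum>e\<in>UNIV. christ g x e a i * g x e c))
       + (\<Sum>i\<in>UNIV. AM$i$b * (\<Sum>e\<in>UNIV. christ g x e a c * g x i e))"
    by (simp add: metric_compat distrib_left sum.distrib)
  have NNe: "NN a $ i $ b = Ad a $ i $ b + (Gam a ** AM)$i$b - (AM ** Gam a)$i$b" for i
    by (simp add: NN_def)
  have "cov2 g (vcov g V) x a b c = (\<Sum>i\<in>UNIV. Ad a $ i $ b * g x i c) + (\<Sum>i\<in>UNIV. AM $ i $ b * gd a i c)
      - (\<Sum>e\<in>UNIV. christ g x e a b * vcov g V x e c) - (\<Sum>e\<in>UNIV. christ g x e a c * vcov g V x b e)"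
    unfolding cov2_def pd_v by (simp add: sum.distrib)
  also have "\<dots> = (\<Sum>i\<in>UNIV. Ad a $ i $ b * g x i c) + (\<Sum>i\<in>UNIV. (Gam a ** AM)$i$b * g x i c)
      - (\<Sum>i\<in>UNIV. (AM ** Gam a)$i$b * g x i c)"
    unfolding MC T1 T2 T3 by simp
  also have "\<dots> = (\<Sum>i\<in>UNIV. NN a $ i $ b * g x i c)"
    unfolding NNe by (simp add: algebra_simps sum.distrib sum_subtractf)
  finally show ?thesis .
qed

lemma Ad_idem_e: "(\<Sum>l\<in>UNIV. Ad k $ i $ l * AM $ l $ j + AM $ i $ l * Ad k $ l $ j) = Ad k $ i $ j"
proof -
  have "((\<lambda>t. \<Sum>l\<in>UNIV. vmat g V (x + t *\<^sub>R axis k 1) $ i $ l * vmat g V (x + t *\<^sub>R axis k 1) $ l $ j) has_real_derivative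
     (\<Sum>l\<in>UNIV. Ad k $ i $ l * vmat g V (x + 0 *\<^sub>R axis k 1) $ l $ j + Ad k $ l $ j * vmat g V (x + 0 *\<^sub>R axis k 1) $ i $ l)) (at 0)"
    by (intro DERIV_sum DERIV_mult line_A)
  hence "pd (\<lambda>y. (vmat g V y ** vmat g V y) $ i $ j) k x = (\<Sum>l\<in>UNIV. Ad k $ i $ l * AM $ l $ j + AM $ i $ l * Ad k $ l $ j)"
    unfolding matrix_matrix_mult_def AM_def by (intro pd_eq) (simp add: mult.commute)
  moreover have "pd (\<lambda>y. (vmat g V y ** vmat g V y) $ i $ j) k x = pd (\<lambda>y. vmat g V y $ i $ j) k x"
    by (rule pd_cong[OF oU xU]) (simp add: props_at(1))
  ultimately show ?thesis unfolding Ad_def by simp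
qed

lemma Ad_idem: "Ad k ** AM + AM ** Ad k = Ad k"
proof -
  have "(Ad k ** AM + AM ** Ad k) $ i $ j = Ad k $ i $ j" for i j
    using Ad_idem_e[of k i j] by (simp add: matrix_matrix_mult_def sum.distrib)
  thus ?thesis by (simp add: vec_eq_iff)
qed

lemma v_sym: assumes "y \<in> U" shows "vcov g V y b c = vcov g V y c b"
proof -
  have "(transpose (vmat g V y) ** (\<chi> a b. g y a b)) $ b $ c = ((\<chi> a b. g y a b) ** vmat g V y) $ b $ c"
    using props_at(2)[OF assms] by simp
  hence "(\<Sum>i\<in>UNIV. vmat g V y $ i $ b * g y i c) = (\<Sum>i\<in>UNIV. g y b i * vmat g V y $ i $ c)"
    by (simp add: matrix_matrix_mult_def transpose_def)
  also have "\<dots> = (\<Sum>i\<in>UNIV. vmat g V y $ i $ c * g y i b)"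
    using gsym[OF assms] by (simp add: mult.commute)
  finally show ?thesis unfolding vcov_eq .
qed

lemma cov2_v_sym: "cov2 g (vcov g V) x a b c = cov2 g (vcov g V) x a c b"
proof -
  have "pd (\<lambda>y. vcov g V y b c) a x = pd (\<lambda>y. vcov g V y c b) a x"
    by (rule pd_cong[OF oU xU]) (rule v_sym)
  moreover have "vcov g V x e c = vcov g V x c e" "vcov g V x b e = vcov g V x e b" for e
    using v_sym[OF xU] by auto
  ultimately show ?thesis unfolding cov2_def by simp
qed

end

lemma mvb: "((M::real^'n::finite^'m::finite) *v axis b 1) $ d = M $ d $ b"
  by (simp add: matrix_vector_mult_basis column_def)

context ptpoint begin

lemma idA: "AM *v (AM *v Z) = AM *v Z"
  using props_at(1)[OF xU] by (simp add: matrix_vector_mul_assoc AM_def)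

lemma AdA: "Ad k *v (AM *v Y) + AM *v (Ad k *v Y) = Ad k *v Y"
proof -
  have "(Ad k ** AM + AM ** Ad k) *v Y = Ad k *v Y" by (simp only: Ad_idem)
  thus ?thesis by (simp add: matrix_vector_mult_add_rdistrib matrix_vector_mul_assoc)
qed

lemma Nv: "NN k *v Z = Ad k *v Z + Gam k *v (AM *v Z) - AM *v (Gam k *v Z)"
  unfolding NN_def by (simp add: matrix_vector_mult_add_rdistrib matrix_vector_mult_diff_rdistrib matrix_vector_mul_assoc)

lemma GN_sym: "transpose (GM ** NN k) = GM ** NN k"
proof -
  have e: "(GM ** NN k) $ c $ b = cov2 g (vcov g V) x k b c" for b c
  proof -
    have "(GM ** NN k) $ c $ b = (\<Sum>i\<in>UNIV. g x c i * NN k $ i $ b)"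
      by (simp add: GM_def matrix_matrix_mult_def)
    also have "\<dots> = (\<Sum>i\<in>UNIV. NN k $ i $ b * g x i c)"
    proof (rule sum.cong[OF refl])
      fix i show "g x c i * NN k $ i $ b = NN k $ i $ b * g x i c"
        using gsym[OF xU, of c i] by simp
    qed
    finally show ?thesis unfolding cov2_v .
  qed
  have "transpose (GM ** NN k) $ b $ c = (GM ** NN k) $ b $ c" for b c
    unfolding transpose_def using e[of b c] e[of c b] cov2_v_sym[of k b c] by simp
  thus ?thesis by (simp add: vec_eq_iff)
qed

lemma alg: "ptalg GM AM NN"
proof
  show "transpose GM = GM" by (rule sG)
  show "invertible GM" by (rule iG)
  show "AM *v (AM *v Y) = AM *v Y" for Y by (rule idA)
  show "(AM *v X) \<bullet> (GM *v Y) = X \<bullet> (GM *v (AM *v Y))" for X Y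
  proof -
    have "(AM *v X) \<bullet> (GM *v Y) = (X v* transpose AM) \<bullet> (GM *v Y)" by simp
    also have "\<dots> = X \<bullet> (transpose AM *v (GM *v Y))" by (rule dot_lmul_matrix)
    also have "transpose AM *v (GM *v Y) = (transpose AM ** GM) *v Y" by (simp add: matrix_vector_mul_assoc)
    also have "transpose AM ** GM = GM ** AM" using props_at(2)[OF xU] unfolding AM_def GM_def .
    finally show ?thesis by (simp add: matrix_vector_mul_assoc)
  qed
  show "NN k *v (AM *v Y) + AM *v (NN k *v Y) = NN k *v Y" for k Y
    unfolding Nv using AdA[of k Y] idA
    by (simp add: matrix_vector_right_distrib matrix_vector_mult_diff_distrib algebra_simps)
  show "(NN k *v Y) \<bullet> (GM *v Z) = (NN k *v Z) \<bullet> (GM *v Y)" for k Y Z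
  proof -
    have "(NN k *v Y) \<bullet> (GM *v Z) = Z \<bullet> (GM *v (NN k *v Y))" by (rule inner_sym_matrix[OF sG])
    also have "\<dots> = Z \<bullet> ((GM ** NN k) *v Y)" by (simp add: matrix_vector_mul_assoc)
    also have "\<dots> = (Z v* (GM ** NN k)) \<bullet> Y" by (simp add: dot_lmul_matrix)
    also have "Z v* (GM ** NN k) = transpose (GM ** NN k) *v Z" by simp
    also have "\<dots> = GM *v (NN k *v Z)" unfolding GN_sym by (simp add: matrix_vector_mul_assoc)
    also have "(GM *v (NN k *v Z)) \<bullet> Y = Y \<bullet> (GM *v (NN k *v Z))" by (rule inner_commute)
    also have "\<dots> = (NN k *v Z) \<bullet> (GM *v Y)" by (rule inner_sym_matrix[OF sG])
    finally show ?thesis .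
  qed
qed

lemma NNv_axis: "ptalg.NNv NN (axis a 1) Y = NN a *v Y"
proof -
  have "ptalg.NNv NN (axis a 1) Y = (\<Sum>c\<in>UNIV. if c = a then NN a *v Y else 0)"
    unfolding ptalg.NNv_def[OF alg] by (rule sum.cong) (auto simp: axis_def)
  thus ?thesis by simp
qed

lemma tc_eq: "ptalg.tc GM NN = cov2 g (vcov g V) x"
proof (intro ext)
  fix a b c
  have "ptalg.tc GM NN a b c = (NN a *v axis b 1) \<bullet> (GM *v axis c 1)"
    unfolding ptalg.tc_def[OF alg] ptalg.tri_def[OF alg] ptalg.bil_def[OF alg] NNv_axis ..
  also have "\<dots> = (\<Sum>i\<in>UNIV. NN a $ i $ b * g x i c)"
    by (simp add: inner_vec_def mvb GM_def)
  finally show "ptalg.tc GM NN a b c = cov2 g (vcov g V) x a b c" unfolding cov2_v .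
qed

end

context ptpoint begin

lemma Gam_v: "(Gam c *v W) $ d = (\<Sum>e\<in>UNIV. christ g x d c e * W $ e)"
  by (simp add: Gam_def matrix_vector_mult_def)

lemma covvec_v: "covvec g x Z (\<lambda>y. vmat g V y *v axis b 1) =
   (\<Sum>c\<in>UNIV. Z$c *\<^sub>R (Ad c *v axis b 1 + Gam c *v (AM *v axis b 1)))"
proof -
  have "covvec g x Z (\<lambda>y. vmat g V y *v axis b 1) $ d =
     (\<Sum>c\<in>UNIV. Z$c *\<^sub>R (Ad c *v axis b 1 + Gam c *v (AM *v axis b 1))) $ d" for d
  proof -
    have "covvec g x Z (\<lambda>y. vmat g V y *v axis b 1) $ d =
       (\<Sum>c\<in>UNIV. Z$c * (pd (\<lambda>y. vmat g V y $ d $ b) c x + (\<Sum>e\<in>UNIV. christ g x d c e * (AM *v axis b 1) $ e)))"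
      unfolding covvec_def AM_def by (simp add: mvb)
    also have "\<dots> = (\<Sum>c\<in>UNIV. Z$c * ((Ad c *v axis b 1) $ d + (Gam c *v (AM *v axis b 1)) $ d))"
      by (simp add: Gam_v mvb Ad_def)
    also have "\<dots> = (\<Sum>c\<in>UNIV. Z$c *\<^sub>R (Ad c *v axis b 1 + Gam c *v (AM *v axis b 1))) $ d"
      by (simp add: sum_component)
    finally show ?thesis .
  qed
  thus ?thesis by (simp add: vec_eq_iff)
qed

lemma pd_h: "pd (\<lambda>y. (hmat g V y *v axis b 1) $ d) c x = - Ad c $ d $ b"
proof -
  have "((\<lambda>t. (mat 1 :: real^'n^'n) $ d $ b - vmat g V (x + t *\<^sub>R axis c 1) $ d $ b) has_real_derivative 0 - Ad c $ d $ b) (at 0)"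
    by (intro DERIV_diff DERIV_const line_A)
  thus ?thesis unfolding hmat_def by (intro pd_eq) (simp add: mvb)
qed

lemma covvec_h: "covvec g x Z (\<lambda>y. hmat g V y *v axis b 1) =
   (\<Sum>c\<in>UNIV. Z$c *\<^sub>R (- (Ad c *v axis b 1) + Gam c *v (hmat g V x *v axis b 1)))"
proof -
  have "covvec g x Z (\<lambda>y. hmat g V y *v axis b 1) $ d =
     (\<Sum>c\<in>UNIV. Z$c *\<^sub>R (- (Ad c *v axis b 1) + Gam c *v (hmat g V x *v axis b 1))) $ d" for d
  proof -
    have "covvec g x Z (\<lambda>y. hmat g V y *v axis b 1) $ d =
       (\<Sum>c\<in>UNIV. Z$c * (- Ad c $ d $ b + (\<Sum>e\<in>UNIV. christ g x d c e * (hmat g V x *v axis b 1) $ e)))"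
      unfolding covvec_def pd_h by simp
    also have "\<dots> = (\<Sum>c\<in>UNIV. Z$c * ((- (Ad c *v axis b 1)) $ d + (Gam c *v (hmat g V x *v axis b 1)) $ d))"
      by (simp add: Gam_v mvb)
    also have "\<dots> = (\<Sum>c\<in>UNIV. Z$c *\<^sub>R (- (Ad c *v axis b 1) + Gam c *v (hmat g V x *v axis b 1))) $ d"
      by (simp add: sum_component)
    finally show ?thesis .
  qed
  thus ?thesis by (simp add: vec_eq_iff)
qed

lemma hx: "hmat g V x *v Y = Y - AM *v Y"
  unfolding hmat_def AM_def by (simp add: matrix_vector_mult_diff_rdistrib)

lemma Qv_eq: "Qv g V x a b = ptalg.QV AM NN (axis a 1) (axis b 1)"
proof -
  have pc: "hmat g V x *v (Ad c *v W + Gam c *v (AM *v W)) = NN c *v (AM *v W)" for c W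
    unfolding hx Nv using AdA[of c W] idA
    by (simp add: matrix_vector_right_distrib matrix_vector_mult_diff_distrib algebra_simps)
  have "Qv g V x a b = (\<Sum>c\<in>UNIV. (AM *v axis a 1)$c *\<^sub>R (hmat g V x *v (Ad c *v axis b 1 + Gam c *v (AM *v axis b 1))))"
    unfolding Qv_def covvec_v AM_def[symmetric] by (simp add: mv_sum matrix_vector_mult_scaleR)
  also have "\<dots> = ptalg.QV AM NN (axis a 1) (axis b 1)"
    unfolding ptalg.QV_def[OF alg] ptalg.NNv_def[OF alg] pc ..
  finally show ?thesis .
qed

lemma Qh_eq: "Qh g V x a b = - ptalg.QH AM NN (axis a 1) (axis b 1)"
proof -
  have pc: "AM *v (- (Ad c *v W) + Gam c *v (hmat g V x *v W)) = - (NN c *v (hmat g V x *v W))" for c W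
  proof -
    have "AM *v (hmat g V x *v W) = 0" unfolding hx by (simp add: matrix_vector_mult_diff_distrib idA)
    thus ?thesis unfolding hx Nv using AdA[of c W] idA
      by (simp add: matrix_vector_right_distrib matrix_vector_mult_diff_distrib algebra_simps)
  qed
  have Hv: "ptalg.Hv AM Y = hmat g V x *v Y" for Y unfolding ptalg.Hv_def[OF alg] hx ..
  have "Qh g V x a b = (\<Sum>c\<in>UNIV. (hmat g V x *v axis a 1)$c *\<^sub>R (AM *v (- (Ad c *v axis b 1) + Gam c *v (hmat g V x *v axis b 1))))"
    unfolding Qh_def covvec_h AM_def[symmetric] by (simp add: mv_sum matrix_vector_mult_scaleR)
  also have "\<dots> = - ptalg.QH AM NN (axis a 1) (axis b 1)"
    unfolding ptalg.QH_def[OF alg] ptalg.NNv_def[OF alg] pc Hv by (simp add: sum_negf)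
  finally show ?thesis .
qed

lemma TG_at: "(\<forall>a b. Sv g V x a b = 0 \<and> Sh g V x a b = 0) \<longleftrightarrow>
   (\<forall>a b c. sym3 (cov2 g (vcov g V) x) a b c = 0)"
proof -
  have sv: "Sv g V x a b = 0 \<longleftrightarrow> ptalg.QV AM NN (axis a 1) (axis b 1) + ptalg.QV AM NN (axis b 1) (axis a 1) = 0" for a b
    unfolding Sv_def Qv_eq by simp
  have sh: "Sh g V x a b = 0 \<longleftrightarrow> ptalg.QH AM NN (axis a 1) (axis b 1) + ptalg.QH AM NN (axis b 1) (axis a 1) = 0" for a b
  proof -
    have "Sh g V x a b = (- 1/2) *\<^sub>R (ptalg.QH AM NN (axis a 1) (axis b 1) + ptalg.QH AM NN (axis b 1) (axis a 1))"
      unfolding Sh_def Qh_eq by (simp add: algebra_simps)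
    thus ?thesis by simp
  qed
  show ?thesis unfolding sv sh using ptalg.TG_iff[OF alg] unfolding tc_eq .
qed

end

lemma sym3_scale: "sym3 (\<lambda>a b c. k * F a b c) a b c = k * sym3 F a b c"
  unfolding sym3_def by (simp add: algebra_simps)

context ptpoint begin

lemma cov2_comb:
  assumes T: "\<And>y b c. T y b c = \<alpha> * vcov g V y b c + \<beta> * g y b c"
  shows "cov2 g T x a b c = \<alpha> * cov2 g (vcov g V) x a b c"
proof -
  have "((\<lambda>t. \<alpha> * vcov g V (x + t *\<^sub>R axis a 1) b c + \<beta> * g (x + t *\<^sub>R axis a 1) b c) has_real_derivative
     \<alpha> * (\<Sum>i\<in>UNIV. Ad a $ i $ b * g x i c + AM $ i $ b * gd a i c) + \<beta> * gd a b c) (at 0)"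
    by (intro DERIV_add DERIV_cmult line_v line_g)
  hence p0: "pd (\<lambda>y. \<alpha> * vcov g V y b c + \<beta> * g y b c) a x =
     \<alpha> * (\<Sum>i\<in>UNIV. Ad a $ i $ b * g x i c + AM $ i $ b * gd a i c) + \<beta> * gd a b c"
    by (rule pd_eq)
  have Te: "T = (\<lambda>y b c. \<alpha> * vcov g V y b c + \<beta> * g y b c)" using T by (intro ext) simp
  have pT: "pd (\<lambda>y. T y b c) a x = \<alpha> * pd (\<lambda>y. vcov g V y b c) a x + \<beta> * pd (\<lambda>y. g y b c) a x"
    unfolding Te p0 pd_v gd_def ..
  have "cov2 g T x a b c = \<alpha> * cov2 g (vcov g V) x a b c + \<beta> * cov2 g g x a b c"
    unfolding cov2_def pT by (simp add: T algebra_simps sum.distrib sum_distrib_left)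
  thus ?thesis using cov2_g by simp
qed

lemma sum_mat1': "(\<Sum>d\<in>UNIV. f d * (mat 1 :: real^'n^'n) $ c $ d) = f c"
  using sum_mat1[of c f] by (simp add: mult.commute)

lemma trv: "(\<Sum>a\<in>UNIV. \<Sum>b\<in>UNIV. ginv g x a b * vcov g V x a b) = trace AM"
proof -
  have "(\<Sum>b\<in>UNIV. ginv g x a b * vcov g V x a b) = AM $ a $ a" for a
  proof -
    have "(\<Sum>b\<in>UNIV. ginv g x a b * vcov g V x a b) = (\<Sum>b\<in>UNIV. \<Sum>i\<in>UNIV. matrix_inv GM $ a $ b * (AM $ i $ a * GM $ b $ i))"
      unfolding vx ginv_def GM_def[symmetric] by (simp add: sum_distrib_left GM_def gsym[OF xU])
    also have "\<dots> = (\<Sum>i\<in>UNIV. AM $ i $ a * (matrix_inv GM ** GM) $ a $ i)"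
      by (subst sum.swap) (simp add: matrix_matrix_mult_def sum_distrib_left mult_ac)
    also have "\<dots> = AM $ a $ a" unfolding matrix_inv_both(2)[OF iG] by (rule sum_mat1')
    finally show ?thesis .
  qed
  thus ?thesis by (simp add: trace_def)
qed

lemma trg: "(\<Sum>a\<in>UNIV. \<Sum>b\<in>UNIV. ginv g x a b * g x a b) = real CARD('n)"
proof -
  have "(\<Sum>b\<in>UNIV. ginv g x a b * g x a b) = 1" for a
  proof -
    have "(\<Sum>b\<in>UNIV. ginv g x a b * g x a b) = (matrix_inv GM ** GM) $ a $ a"
      unfolding ginv_def GM_def[symmetric] by (simp add: matrix_matrix_mult_def GM_def gsym[OF xU])
    thus ?thesis unfolding matrix_inv_both(2)[OF iG] by (simp add: mat_def)
  qed
  thus ?thesis by simp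
qed

lemma trh: "(\<Sum>a\<in>UNIV. \<Sum>b\<in>UNIV. ginv g x a b * hcov g V x a b) = real CARD('n) - trace AM"
  unfolding hcov_eq using trv trg by (simp add: right_diff_distrib sum_subtractf)

lemma trA: "trace AM = real (dim (V x))"
  using trace_idem[OF props_at(1)[OF xU]] props_at(3)[OF xU] unfolding AM_def by simp

end

context ptpoint begin

lemma conf_at:
  assumes "\<forall>a b c. sym3 (cov2 g (vcov g V) x) a b c = sym3 (\<lambda>a b c. g x a b * s c) a b c"
  shows "\<forall>a b c. sym3 (cov2 g (vcov g V) x) a b c = 0"
proof -
  have "(\<lambda>a b c. GM $ a $ b * s c) = (\<lambda>a b c. g x a b * s c)" by (simp add: GM_def)
  thus ?thesis using ptalg.conf[OF alg, of s] assms unfolding tc_eq by simp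
qed

lemma vsym_x: "vcov g V x a b = vcov g V x b a" by (rule v_sym[OF xU])
lemma gsym_x: "g x a b = g x b a" by (rule gsym[OF xU])

end

theorem corollary1:
  fixes U :: "(real^'n::finite) set" and g :: "'n tensor2"
    and V :: "real^'n \<Rightarrow> (real^'n) set" and p q :: nat
  assumes "pseudo_riemannian_on U g"
    and "almost_product_on U g V p"
    and "q = CARD('n) - p"
  shows "(totally_geodesic_on U g V \<longleftrightarrow>
            (\<forall>C D :: real. killing_tensor_on U g (\<lambda>x a b. C * vcov g V x a b + D * hcov g V x a b)))
       \<and> (totally_geodesic_on U g V \<longleftrightarrow>
            (\<forall>C :: real. conformal_tensor_on U g
               (\<lambda>x a b. C * (real q * vcov g V x a b - real p * hcov g V x a b))))"
proof -
  have oU: "open U" using assms(1) unfolding pseudo_riemannian_on_def by blast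
  have gs: "\<And>x. x \<in> U \<Longrightarrow> (\<forall>i j. g x i j = g x j i) \<and> det (\<chi> a b. g x a b) \<noteq> 0 \<and>
        (\<forall>i j. (\<lambda>y. g y i j) differentiable (at x))"
    using assms(1) unfolding pseudo_riemannian_on_def by blast
  have ap: "\<And>x. x \<in> U \<Longrightarrow> subspace (V x) \<and> dim (V x) = p \<and>
        (\<forall>X\<in>V x. (\<forall>Y\<in>V x. gform g x X Y = 0) \<longrightarrow> X = 0) \<and>
        (\<forall>i j. (\<lambda>y. vmat g V y $ i $ j) differentiable (at x))"
    using assms(2) unfolding almost_product_on_def by blast
  have pt: "ptpoint U g V x" if xU: "x \<in> U" for x
  proof (rule ptpoint.intro)
    show "open U" by (rule oU)
    show "x \<in> U" by (rule xU)
    show "\<And>y i j. y \<in> U \<Longrightarrow> g y i j = g y j i" using gs by blast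
    show "\<And>y. y \<in> U \<Longrightarrow> det (\<chi> a b. g y a b) \<noteq> 0" using gs by blast
    show "\<And>i j. (\<lambda>y. g y i j) differentiable (at x)" using gs[OF xU] by blast
    show "\<And>y. y \<in> U \<Longrightarrow> subspace (V y)" using ap by blast
    show "\<And>y. y \<in> U \<Longrightarrow> \<forall>X\<in>V y. (\<forall>Y\<in>V y. gform g y X Y = 0) \<longrightarrow> X = 0" using ap by blast
    show "\<And>i j. (\<lambda>y. vmat g V y $ i $ j) differentiable (at x)" using ap[OF xU] by blast
  qed
  define cv where "cv x = cov2 g (vcov g V) x" for x
  have TGi: "totally_geodesic_on U g V \<longleftrightarrow> (\<forall>x\<in>U. \<forall>a b c. sym3 (cv x) a b c = 0)"
    unfolding totally_geodesic_on_def cv_def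
    by (rule ball_cong[OF refl]) (rule ptpoint.TG_at[OF pt])
  have pLe: "p \<le> CARD('n)" if "x \<in> U" for x
    using ap[OF that] dim_subset_UNIV[of "V x"] by simp
  have Kc: "cov2 g (\<lambda>x a b. C * vcov g V x a b + D * hcov g V x a b) x = (\<lambda>a b c. (C - D) * cv x a b c)"
    if "x \<in> U" for x C D
  proof (intro ext)
    fix a b c
    show "cov2 g (\<lambda>x a b. C * vcov g V x a b + D * hcov g V x a b) x a b c = (C - D) * cv x a b c"
      unfolding cv_def
      by (rule ptpoint.cov2_comb[OF pt[OF that], where \<alpha> = "C - D" and \<beta> = D]) (simp add: hcov_eq algebra_simps)
  qed
  have Ks: "C * vcov g V x a b + D * hcov g V x a b = C * vcov g V x b a + D * hcov g V x b a"
    if "x \<in> U" for x C D a b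
    using ptpoint.vsym_x[OF pt[OF that], of a b] ptpoint.gsym_x[OF pt[OF that], of a b]
    by (simp add: hcov_eq)
  have part1: "totally_geodesic_on U g V \<longleftrightarrow>
      (\<forall>C D :: real. killing_tensor_on U g (\<lambda>x a b. C * vcov g V x a b + D * hcov g V x a b))"
  proof
    assume tg: "totally_geodesic_on U g V"
    show "\<forall>C D :: real. killing_tensor_on U g (\<lambda>x a b. C * vcov g V x a b + D * hcov g V x a b)"
    proof (intro allI)
      fix C D :: real
      show "killing_tensor_on U g (\<lambda>x a b. C * vcov g V x a b + D * hcov g V x a b)"
        unfolding killing_tensor_on_def
      proof (intro ballI conjI)
        fix x assume xU: "x \<in> U"
        show "\<forall>a b. C * vcov g V x a b + D * hcov g V x a b = C * vcov g V x b a + D * hcov g V x b a"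
          using Ks[OF xU] by blast
        show "\<forall>a b c. sym3 (cov2 g (\<lambda>x a b. C * vcov g V x a b + D * hcov g V x a b) x) a b c = 0"
          unfolding Kc[OF xU] sym3_scale using tg TGi xU by simp
      qed
    qed
  next
    assume k: "\<forall>C D :: real. killing_tensor_on U g (\<lambda>x a b. C * vcov g V x a b + D * hcov g V x a b)"
    have "\<forall>x\<in>U. \<forall>a b c. sym3 (cv x) a b c = 0"
    proof (intro ballI allI)
      fix x a b c assume xU: "x \<in> U"
      have "sym3 (cov2 g (\<lambda>x a b. 1 * vcov g V x a b + 0 * hcov g V x a b) x) a b c = 0"
        using k xU unfolding killing_tensor_on_def by blast
      thus "sym3 (cv x) a b c = 0" unfolding Kc[OF xU] sym3_scale by simp
    qed
    thus "totally_geodesic_on U g V" using TGi by simp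
  qed
  have Tc: "cov2 g (\<lambda>x a b. C * (real q * vcov g V x a b - real p * hcov g V x a b)) x =
      (\<lambda>a b c. (C * (real q + real p)) * cv x a b c)" if "x \<in> U" for x C
  proof (intro ext)
    fix a b c
    show "cov2 g (\<lambda>x a b. C * (real q * vcov g V x a b - real p * hcov g V x a b)) x a b c =
      (C * (real q + real p)) * cv x a b c"
      unfolding cv_def
      by (rule ptpoint.cov2_comb[OF pt[OF that], where \<beta> = "- C * real p"]) (simp add: hcov_eq algebra_simps)
  qed
  have qp: "real q + real p = real CARD('n)" if "x \<in> U" for x
    using pLe[OF that] assms(3) by simp
  have tr: "(\<Sum>a\<in>UNIV. \<Sum>b\<in>UNIV. ginv g x a b * (C * (real q * vcov g V x a b - real p * hcov g V x a b))) = 0"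
    if xU: "x \<in> U" for x C
  proof -
    have "(\<Sum>a\<in>UNIV. \<Sum>b\<in>UNIV. ginv g x a b * (C * (real q * vcov g V x a b - real p * hcov g V x a b)))
       = C * (real q * (\<Sum>a\<in>UNIV. \<Sum>b\<in>UNIV. ginv g x a b * vcov g V x a b)
              - real p * (\<Sum>a\<in>UNIV. \<Sum>b\<in>UNIV. ginv g x a b * hcov g V x a b))"
      by (simp add: sum_distrib_left right_diff_distrib sum_subtractf algebra_simps)
    also have "\<dots> = C * (real q * real p - real p * (real CARD('n) - real p))"
      using ptpoint.trv[OF pt[OF xU]] ptpoint.trh[OF pt[OF xU]] ptpoint.trA[OF pt[OF xU]] ap[OF xU] by simp
    also have "\<dots> = 0" by (simp add: qp[OF xU, symmetric] algebra_simps)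
    finally show ?thesis .
  qed
  have Ts: "C * (real q * vcov g V x a b - real p * hcov g V x a b) = C * (real q * vcov g V x b a - real p * hcov g V x b a)"
    if "x \<in> U" for x C a b
    using ptpoint.vsym_x[OF pt[OF that], of a b] ptpoint.gsym_x[OF pt[OF that], of a b]
    by (simp add: hcov_eq)
  have part2: "totally_geodesic_on U g V \<longleftrightarrow>
      (\<forall>C :: real. conformal_tensor_on U g (\<lambda>x a b. C * (real q * vcov g V x a b - real p * hcov g V x a b)))"
  proof
    assume tg: "totally_geodesic_on U g V"
    show "\<forall>C :: real. conformal_tensor_on U g (\<lambda>x a b. C * (real q * vcov g V x a b - real p * hcov g V x a b))"
    proof (intro allI)
      fix C :: real
      show "conformal_tensor_on U g (\<lambda>x a b. C * (real q * vcov g V x a b - real p * hcov g V x a b))"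
        unfolding conformal_tensor_on_def
      proof (intro conjI)
        show "\<forall>x\<in>U. (\<forall>a b. C * (real q * vcov g V x a b - real p * hcov g V x a b) = C * (real q * vcov g V x b a - real p * hcov g V x b a)) \<and>
          (\<Sum>a\<in>UNIV. \<Sum>b\<in>UNIV. ginv g x a b * (C * (real q * vcov g V x a b - real p * hcov g V x a b))) = 0"
          using Ts tr by blast
        show "\<exists>t :: real^'n \<Rightarrow> 'n \<Rightarrow> real. \<forall>x\<in>U. \<forall>a b c. sym3 (cov2 g (\<lambda>x a b. C * (real q * vcov g V x a b - real p * hcov g V x a b)) x) a b c =
            sym3 (\<lambda>a b c. g x a b * t x c) a b c"
        proof (intro exI[of _ "\<lambda>x c. 0"] ballI allI)
          fix x a b c assume xU: "x \<in> U"
          show "sym3 (cov2 g (\<lambda>x a b. C * (real q * vcov g V x a b - real p * hcov g V x a b)) x) a b c =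
            sym3 (\<lambda>a b c. g x a b * 0) a b c"
            unfolding Tc[OF xU] sym3_scale using tg TGi xU by (simp add: sym3_def)
        qed
      qed
    qed
  next
    assume cf: "\<forall>C :: real. conformal_tensor_on U g (\<lambda>x a b. C * (real q * vcov g V x a b - real p * hcov g V x a b))"
    then obtain t :: "real^'n \<Rightarrow> 'n \<Rightarrow> real" where t: "\<forall>x\<in>U. \<forall>a b c.
        sym3 (cov2 g (\<lambda>x a b. 1 * (real q * vcov g V x a b - real p * hcov g V x a b)) x) a b c =
        sym3 (\<lambda>a b c. g x a b * t x c) a b c"
      unfolding conformal_tensor_on_def by blast
    have "\<forall>x\<in>U. \<forall>a b c. sym3 (cv x) a b c = 0"
    proof (intro ballI)
      fix x assume xU: "x \<in> U"
      define N where "N = real CARD('n)"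
      have Npos: "N \<noteq> 0" unfolding N_def by simp
      have "\<forall>a b c. sym3 (cov2 g (vcov g V) x) a b c = sym3 (\<lambda>a b c. g x a b * (t x c / N)) a b c"
      proof (intro allI)
        fix a b c
        have tx: "sym3 (cov2 g (\<lambda>x a b. 1 * (real q * vcov g V x a b - real p * hcov g V x a b)) x) a b c =
            sym3 (\<lambda>a b c. g x a b * t x c) a b c" using t xU by blast
        have "N * sym3 (cv x) a b c = sym3 (\<lambda>a b c. g x a b * t x c) a b c"
          using tx unfolding Tc[OF xU] sym3_scale qp[OF xU] N_def by simp
        hence "sym3 (cv x) a b c = sym3 (\<lambda>a b c. g x a b * t x c) a b c / N" using Npos
          by (simp add: field_simps)
        also have "\<dots> = sym3 (\<lambda>a b c. g x a b * (t x c / N)) a b c"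
          unfolding sym3_def using Npos by (simp add: field_simps)
        finally show "sym3 (cov2 g (vcov g V) x) a b c = sym3 (\<lambda>a b c. g x a b * (t x c / N)) a b c"
          unfolding cv_def .
      qed
      thus "\<forall>a b c. sym3 (cv x) a b c = 0" unfolding cv_def by (rule ptpoint.conf_at[OF pt[OF xU]])
    qed
    thus "totally_geodesic_on U g V" using TGi by simp
  qed
  show ?thesis using part1 part2 by blast
qed


end
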